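(* Let $s\in\mathbb{N}$ and $a,c\in\mathbb{Z}_p$ with $c\neq 0$. Let $L_7(s,a,c)$ be the $\mathbb{Z}_p$-Lie lattice with basis $x_0,x_1,x_2$ and brackets $[x_1,x_2]=0$, $[x_0,x_1]=p^sax_1+p^scx_2$, $[x_0,x_2]=p^sx_1$. Assume that one of the following holds: (1) $v_p(a)\geqslant 1$ and $v_p(c)\geqslant 2$; (2) $v_p(a)=0$ and $v_p(c)\geqslant 1$; (3) $p\geqslant 3$, $a\neq 0$, $v_p(a)\geqslant 1$ and $v_p(c)=0$; (4) $a=0$, $v_p(c)=0$ and $c$ is not a square modulo $p$; (5) $v_p(a)=0$, $v_p(c)=0$ and $v_p(4c+a^2)\neq 1$. Then $L_7(s,a,c)$ is not self-similar of index $p$.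
   Context: $p$ is any prime, $\mathbb{N}=\{0,1,2,\dots\}$, $v_p$ is the $p$-adic valuation. A virtual endomorphism of a $\mathbb{Z}_p$-Lie lattice $L$ is a homomorphism of algebras $\varphi:M\to L$ with $M\subseteq L$ a finite-index subalgebra, of index $[L:M]$. An ideal $I$ of $L$ is $\varphi$-invariant if it lies in the domain of every power of $\varphi$ and $\varphi(I)\subseteq I$; $\varphi$ is simple if no non-zero ideal is $\varphi$-invariant. $L$ is self-similar of index $p^k$ if it has a simple virtual endomorphism of index $p^k$. *)

theory Defs
  imports Main "HOL-Library.Extended_Nat" "HOL-Computational_Algebra.Primes"
begin

text \<open>An element of \<open>\<int>\<^sub>p\<close> is represented by its coherent sequence of residues:
  \<open>f n\<close> is the residue modulo \<open>p^n\<close> (in \<open>{0..<p^n}\<close>), and \<open>f n = f (n+1) mod p^n\<close>.\<close>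

definition zp :: "nat \<Rightarrow> (nat \<Rightarrow> int) set" where
  "zp p = {f. \<forall>n. 0 \<le> f n \<and> f n < int p ^ n \<and> f n = f (Suc n) mod (int p ^ n)}"

definition zp_zero :: "nat \<Rightarrow> int" where
  "zp_zero = (\<lambda>n. 0)"

definition zp_of_int :: "nat \<Rightarrow> int \<Rightarrow> (nat \<Rightarrow> int)" where
  "zp_of_int p k = (\<lambda>n. k mod (int p ^ n))"

definition zp_add :: "nat \<Rightarrow> (nat \<Rightarrow> int) \<Rightarrow> (nat \<Rightarrow> int) \<Rightarrow> (nat \<Rightarrow> int)" where
  "zp_add p x y = (\<lambda>n. (x n + y n) mod (int p ^ n))"

definition zp_neg :: "nat \<Rightarrow> (nat \<Rightarrow> int) \<Rightarrow> (nat \<Rightarrow> int)" where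
  "zp_neg p x = (\<lambda>n. (- x n) mod (int p ^ n))"

definition zp_sub :: "nat \<Rightarrow> (nat \<Rightarrow> int) \<Rightarrow> (nat \<Rightarrow> int) \<Rightarrow> (nat \<Rightarrow> int)" where
  "zp_sub p x y = (\<lambda>n. (x n - y n) mod (int p ^ n))"

definition zp_mul :: "nat \<Rightarrow> (nat \<Rightarrow> int) \<Rightarrow> (nat \<Rightarrow> int) \<Rightarrow> (nat \<Rightarrow> int)" where
  "zp_mul p x y = (\<lambda>n. (x n * y n) mod (int p ^ n))"

definition zp_val :: "nat \<Rightarrow> (nat \<Rightarrow> int) \<Rightarrow> enat" where
  "zp_val p x = (if x = zp_zero then \<infinity> else enat (LEAST n. x (Suc n) \<noteq> 0))"

record 'a zp_lie =
  lcarrier :: "'a set"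
  lzero :: 'a
  ladd :: "'a \<Rightarrow> 'a \<Rightarrow> 'a"
  lsmul :: "(nat \<Rightarrow> int) \<Rightarrow> 'a \<Rightarrow> 'a"
  lbr :: "'a \<Rightarrow> 'a \<Rightarrow> 'a"

definition lie_subalgebra :: "nat \<Rightarrow> 'a zp_lie \<Rightarrow> 'a set \<Rightarrow> bool" where
  "lie_subalgebra p L M \<longleftrightarrow> M \<subseteq> lcarrier L \<and> lzero L \<in> M \<and>
     (\<forall>x\<in>M. \<forall>y\<in>M. ladd L x y \<in> M \<and> lbr L x y \<in> M) \<and>
     (\<forall>r\<in>zp p. \<forall>x\<in>M. lsmul L r x \<in> M)"

definition lie_ideal :: "nat \<Rightarrow> 'a zp_lie \<Rightarrow> 'a set \<Rightarrow> bool" where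
  "lie_ideal p L I \<longleftrightarrow> I \<subseteq> lcarrier L \<and> lzero L \<in> I \<and>
     (\<forall>x\<in>I. \<forall>y\<in>I. ladd L x y \<in> I) \<and>
     (\<forall>r\<in>zp p. \<forall>x\<in>I. lsmul L r x \<in> I) \<and>
     (\<forall>x\<in>lcarrier L. \<forall>y\<in>I. lbr L x y \<in> I)"

definition lie_cosets :: "'a zp_lie \<Rightarrow> 'a set \<Rightarrow> 'a set set" where
  "lie_cosets L M = {{ladd L x m | m. m \<in> M} | x. x \<in> lcarrier L}"

definition lie_index :: "'a zp_lie \<Rightarrow> 'a set \<Rightarrow> nat" where
  "lie_index L M = card (lie_cosets L M)"

definition virtual_endo :: "nat \<Rightarrow> 'a zp_lie \<Rightarrow> 'a set \<Rightarrow> ('a \<Rightarrow> 'a) \<Rightarrow> bool" where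
  "virtual_endo p L M \<phi> \<longleftrightarrow> lie_subalgebra p L M \<and> finite (lie_cosets L M) \<and>
     (\<forall>x\<in>M. \<phi> x \<in> lcarrier L) \<and>
     (\<forall>x\<in>M. \<forall>y\<in>M. \<phi> (ladd L x y) = ladd L (\<phi> x) (\<phi> y)) \<and>
     (\<forall>r\<in>zp p. \<forall>x\<in>M. \<phi> (lsmul L r x) = lsmul L r (\<phi> x)) \<and>
     (\<forall>x\<in>M. \<forall>y\<in>M. \<phi> (lbr L x y) = lbr L (\<phi> x) (\<phi> y))"

primrec dom_pow :: "'a zp_lie \<Rightarrow> 'a set \<Rightarrow> ('a \<Rightarrow> 'a) \<Rightarrow> nat \<Rightarrow> 'a set" where
  "dom_pow L M \<phi> 0 = lcarrier L"
| "dom_pow L M \<phi> (Suc n) = {x \<in> M. \<phi> x \<in> dom_pow L M \<phi> n}"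

definition invariant_ideal :: "nat \<Rightarrow> 'a zp_lie \<Rightarrow> 'a set \<Rightarrow> ('a \<Rightarrow> 'a) \<Rightarrow> 'a set \<Rightarrow> bool" where
  "invariant_ideal p L M \<phi> I \<longleftrightarrow> lie_ideal p L I \<and> (\<forall>n. I \<subseteq> dom_pow L M \<phi> n) \<and> \<phi> ` I \<subseteq> I"

definition simple_virtual_endo :: "nat \<Rightarrow> 'a zp_lie \<Rightarrow> 'a set \<Rightarrow> ('a \<Rightarrow> 'a) \<Rightarrow> bool" where
  "simple_virtual_endo p L M \<phi> \<longleftrightarrow> virtual_endo p L M \<phi> \<and>
     (\<forall>I. invariant_ideal p L M \<phi> I \<longrightarrow> I = {lzero L})"

definition self_similar_of_index :: "nat \<Rightarrow> 'a zp_lie \<Rightarrow> nat \<Rightarrow> bool" where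
  "self_similar_of_index p L k \<longleftrightarrow>
     (\<exists>M \<phi>. simple_virtual_endo p L M \<phi> \<and> lie_index L M = p ^ k)"

text \<open>Elements \<open>u0 x0 + u1 x1 + u2 x2\<close> are triples \<open>(u0,u1,u2)\<close>.
  Brackets: \<open>[x1,x2]=0\<close>, \<open>[x0,x1] = p^s a x1 + p^s c x2\<close>, \<open>[x0,x2] = p^s x1\<close>, extended bilinearly
  and antisymmetrically.\<close>
definition L7 :: "nat \<Rightarrow> nat \<Rightarrow> (nat \<Rightarrow> int) \<Rightarrow> (nat \<Rightarrow> int)
    \<Rightarrow> ((nat \<Rightarrow> int) \<times> (nat \<Rightarrow> int) \<times> (nat \<Rightarrow> int)) zp_lie" where
  "L7 p s a c =
    \<lparr> lcarrier = zp p \<times> zp p \<times> zp p,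
      lzero = (zp_zero, zp_zero, zp_zero),
      ladd = (\<lambda>(u0,u1,u2) (v0,v1,v2). (zp_add p u0 v0, zp_add p u1 v1, zp_add p u2 v2)),
      lsmul = (\<lambda>r (u0,u1,u2). (zp_mul p r u0, zp_mul p r u1, zp_mul p r u2)),
      lbr = (\<lambda>(u0,u1,u2) (v0,v1,v2).
        (let ps = zp_of_int p (int p ^ s);
             d01 = zp_sub p (zp_mul p u0 v1) (zp_mul p u1 v0);
             d02 = zp_sub p (zp_mul p u0 v2) (zp_mul p u2 v0)
         in (zp_zero,
             zp_add p (zp_mul p (zp_mul p ps a) d01) (zp_mul p ps d02),
             zp_mul p (zp_mul p ps c) d01))) \<rparr>"

end

theory Submission
  imports Defs "HOL-Number_Theory.Number_Theory"
begin


typedef zt = "{f :: nat \<Rightarrow> nat \<Rightarrow> int. \<forall>q n. f q n mod (int q ^ n) = f q n}"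
  morphisms rep abs
  by (rule exI[of _ "\<lambda>q n. 0"]) simp

setup_lifting type_definition_zt

instantiation zt :: comm_ring_1
begin
lift_definition zero_zt :: zt is "\<lambda>q n. 0" by simp
lift_definition one_zt :: zt is "\<lambda>q n. 1 mod (int q ^ n)" by simp
lift_definition plus_zt :: "zt \<Rightarrow> zt \<Rightarrow> zt" is "\<lambda>f g q n. (f q n + g q n) mod (int q ^ n)" by simp
lift_definition minus_zt :: "zt \<Rightarrow> zt \<Rightarrow> zt" is "\<lambda>f g q n. (f q n - g q n) mod (int q ^ n)" by simp
lift_definition uminus_zt :: "zt \<Rightarrow> zt" is "\<lambda>f q n. (- f q n) mod (int q ^ n)" by simp
lift_definition times_zt :: "zt \<Rightarrow> zt \<Rightarrow> zt" is "\<lambda>f g q n. (f q n * g q n) mod (int q ^ n)" by simp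
instance
proof
  fix a b c :: zt
  show "a * b * c = a * (b * c)" by transfer (simp add: mod_simps mult.assoc)
  show "a * b = b * a" by transfer (simp add: mult.commute)
  show "1 * a = a" by transfer (simp add: mod_simps)
  show "a + b + c = a + (b + c)" by transfer (simp add: mod_simps add.assoc)
  show "a + b = b + a" by transfer (simp add: add.commute)
  show "0 + a = a" by transfer simp
  show "- a + a = 0" by transfer (simp add: mod_simps)
  show "a - b = a + - b" by transfer (simp add: mod_simps)
  show "(a + b) * c = a * c + b * c" by transfer (simp add: mod_simps ring_distribs)
  show "(0::zt) \<noteq> 1"
  proof transfer
    show "(\<lambda>q n. 0) \<noteq> (\<lambda>q n. 1 mod int q ^ n)"
    proof
      assume "(\<lambda>q n. 0::int) = (\<lambda>q n. 1 mod int q ^ n)"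
      hence "(0::int) = 1 mod int 2 ^ 1" by metis
      thus False by simp
    qed
  qed
qed
end


lemma zp_iff: "x \<in> zp p \<longleftrightarrow> (\<forall>n. 0 \<le> x n \<and> x n < int p ^ n \<and> x n = x (Suc n) mod int p ^ n)"
  unfolding zp_def by (rule mem_Collect_eq)

lemma zp_bounds: "x \<in> zp p \<Longrightarrow> 0 \<le> x n \<and> x n < int p ^ n"
  unfolding zp_iff by blast

lemma zp_step: "x \<in> zp p \<Longrightarrow> x n = x (Suc n) mod int p ^ n"
  unfolding zp_iff by blast

lemma zp_mod: "x \<in> zp p \<Longrightarrow> x n mod int p ^ n = x n"
  using zp_bounds[of x p n] by (simp add: mod_pos_pos_trivial)

lemma zp_cong: "x \<in> zp p \<Longrightarrow> [x n = x (Suc n)] (mod int p ^ n)"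
proof -
  assume "x \<in> zp p"
  hence "x n mod int p ^ n = x (Suc n) mod int p ^ n" using zp_step[of x p n] by (metis mod_mod_trivial)
  thus ?thesis unfolding cong_def .
qed

lemma zp_coh: assumes "x \<in> zp p" "k \<le> m" shows "x k = x m mod int p ^ k"
  using assms(2)
proof (induction m)
  case 0 thus ?case using zp_mod[OF assms(1), of 0] by simp
next
  case (Suc m)
  show ?case
  proof (cases "k = Suc m")
    case True thus ?thesis using zp_mod[OF assms(1), of k] by (simp del: power_Suc)
  next
    case False
    hence "k \<le> m" using Suc by simp
    hence "x k = x m mod int p ^ k" using Suc by simp
    also have "x m = x (Suc m) mod int p ^ m" using assms(1) by (rule zp_step)
    also have "x (Suc m) mod int p ^ m mod int p ^ k = x (Suc m) mod int p ^ k"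
      by (rule mod_mod_cancel) (simp add: \<open>k \<le> m\<close> le_imp_power_dvd)
    finally show ?thesis .
  qed
qed

lemma zp_intro:
  assumes "p > 0" "\<And>n. [g n = g (Suc n)] (mod int p ^ n)"
  shows "(\<lambda>n. g n mod int p ^ n) \<in> zp p"
  unfolding zp_iff
proof (intro allI conjI)
  fix n
  show "0 \<le> g n mod int p ^ n" using assms(1) by simp
  show "g n mod int p ^ n < int p ^ n" using assms(1) by simp
  have "g (Suc n) mod int p ^ Suc n mod int p ^ n = g (Suc n) mod int p ^ n"
    by (rule mod_mod_cancel) (simp add: le_imp_power_dvd)
  also have "\<dots> = g n mod int p ^ n" using assms(2)[of n] by (simp add: cong_def)
  finally show "g n mod int p ^ n = g (Suc n) mod int p ^ Suc n mod int p ^ n" by simp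
qed

lemma zp_zero_mem: "p > 0 \<Longrightarrow> zp_zero \<in> zp p"
  by (simp add: zp_iff zp_zero_def)

lemma zp_add_mem: "p > 0 \<Longrightarrow> x \<in> zp p \<Longrightarrow> y \<in> zp p \<Longrightarrow> zp_add p x y \<in> zp p"
  unfolding zp_add_def by (rule zp_intro) (auto intro: cong_add zp_cong)
lemma zp_sub_mem: "p > 0 \<Longrightarrow> x \<in> zp p \<Longrightarrow> y \<in> zp p \<Longrightarrow> zp_sub p x y \<in> zp p"
  unfolding zp_sub_def by (rule zp_intro) (auto intro: cong_diff zp_cong)
lemma zp_mul_mem: "p > 0 \<Longrightarrow> x \<in> zp p \<Longrightarrow> y \<in> zp p \<Longrightarrow> zp_mul p x y \<in> zp p"
  unfolding zp_mul_def by (rule zp_intro) (auto intro: cong_mult zp_cong)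
lemma zp_neg_mem: "p > 0 \<Longrightarrow> x \<in> zp p \<Longrightarrow> zp_neg p x \<in> zp p"
  unfolding zp_neg_def by (rule zp_intro) (auto intro: cong_minus_minus_iff[THEN iffD2] zp_cong)
lemma zp_of_int_mem: "p > 0 \<Longrightarrow> zp_of_int p k \<in> zp p"
  unfolding zp_of_int_def by (rule zp_intro) auto

lift_definition emb :: "nat \<Rightarrow> (nat \<Rightarrow> int) \<Rightarrow> zt" is
  "\<lambda>p x q n. if q = p then x n mod (int p ^ n) else 0" by simp

lemma emb_add: "emb p (zp_add p x y) = emb p x + emb p y"
  unfolding zp_add_def by transfer (auto simp: mod_simps fun_eq_iff)
lemma emb_sub: "emb p (zp_sub p x y) = emb p x - emb p y"
  unfolding zp_sub_def by transfer (auto simp: mod_simps fun_eq_iff)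
lemma emb_mul: "emb p (zp_mul p x y) = emb p x * emb p y"
  unfolding zp_mul_def by transfer (auto simp: mod_simps fun_eq_iff)
lemma emb_neg: "emb p (zp_neg p x) = - emb p x"
  unfolding zp_neg_def by transfer (auto simp: mod_simps fun_eq_iff)
lemma emb_zero: "emb p zp_zero = 0"
  unfolding zp_zero_def by transfer (auto simp: fun_eq_iff)

definition ep :: "nat \<Rightarrow> zt" where "ep p = emb p (\<lambda>n. 1)"

lemma rep_of_int: "rep (of_int k) = (\<lambda>q n. k mod int q ^ n)"
proof (induction k rule: int_induct[where k=0])
  case base thus ?case by (simp add: zero_zt.rep_eq)
next
  case (step1 i) thus ?case by (simp add: plus_zt.rep_eq one_zt.rep_eq mod_simps)
next
  case (step2 i) thus ?case by (simp add: minus_zt.rep_eq one_zt.rep_eq mod_simps)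
qed

lemma emb_of_int: "emb p (zp_of_int p k) = of_int k * ep p"
  unfolding zp_of_int_def ep_def
  by (auto simp: fun_eq_iff times_zt.rep_eq emb.rep_eq rep_of_int mod_simps intro!: rep_inject[THEN iffD1])

lemma ep_mult: "ep p * emb p x = emb p x"
  unfolding ep_def by transfer (auto simp: fun_eq_iff mod_simps)

lemma emb_inj: "x \<in> zp p \<Longrightarrow> y \<in> zp p \<Longrightarrow> emb p x = emb p y \<longleftrightarrow> x = y"
proof
  assume "x \<in> zp p" "y \<in> zp p" "emb p x = emb p y"
  hence "\<And>n. rep (emb p x) p n = rep (emb p y) p n" by simp
  thus "x = y" using \<open>x \<in> zp p\<close> \<open>y \<in> zp p\<close> by (auto simp: emb.rep_eq zp_mod fun_eq_iff)
qed simp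


lemma rep_mod: "rep X q n mod int q ^ n = rep X q n"
  using rep[of X] by simp

lemma emb_modn: "emb p (\<lambda>n. x n mod int p ^ n) = emb p x"
  by transfer (auto simp: fun_eq_iff)

lemma of_int_mult_emb: "of_int k * emb p x = emb p (zp_mul p (zp_of_int p k) x)"
  unfolding zp_mul_def zp_of_int_def
  by (auto simp: fun_eq_iff times_zt.rep_eq emb.rep_eq rep_of_int mod_simps intro!: rep_inject[THEN iffD1])

lemma of_nat_rep: "rep (of_nat k) = (\<lambda>q n. int k mod int q ^ n)"
  using rep_of_int[of "int k"] by simp

locale padic =
  fixes p :: nat
  assumes pp: "prime p"
begin

lemma p_gt1: "p > 1" using pp prime_gt_1_nat by blast
lemma p_pos: "p > 0" using p_gt1 by simp
lemma pint_prime: "prime (int p)" using pp by simp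
lemma ppow_pos: "int p ^ n > 0" using p_pos by simp

definition G :: "zt \<Rightarrow> bool" where
  "G X \<longleftrightarrow> (\<lambda>n. rep X p n) \<in> zp p \<and> (\<forall>q n. q \<noteq> p \<longrightarrow> rep X q n = 0)"

lemma G_emb: "x \<in> zp p \<Longrightarrow> G (emb p x)"
  unfolding G_def by (auto simp: emb.rep_eq zp_mod)

lemma emb_rep: "G X \<Longrightarrow> emb p (\<lambda>n. rep X p n) = X"
  unfolding G_def
  by (auto simp: fun_eq_iff emb.rep_eq rep_mod intro!: rep_inject[THEN iffD1])

lemma G_iff: "G X \<longleftrightarrow> (\<exists>x\<in>zp p. X = emb p x)"
proof
  assume g: "G X"
  have "emb p (rep X p) = X" using emb_rep[OF g] by simp
  moreover have "rep X p \<in> zp p" using g unfolding G_def by simp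
  ultimately show "\<exists>x\<in>zp p. X = emb p x" by metis
next
  assume "\<exists>x\<in>zp p. X = emb p x" thus "G X" using G_emb by auto
qed

lemma G_add: "G X \<Longrightarrow> G Y \<Longrightarrow> G (X + Y)"
  unfolding G_iff using zp_add_mem[OF p_pos] emb_add by metis
lemma G_sub: "G X \<Longrightarrow> G Y \<Longrightarrow> G (X - Y)"
  unfolding G_iff using zp_sub_mem[OF p_pos] emb_sub by metis
lemma G_mul: "G X \<Longrightarrow> G Y \<Longrightarrow> G (X * Y)"
  unfolding G_iff using zp_mul_mem[OF p_pos] emb_mul by metis
lemma G_neg: "G X \<Longrightarrow> G (- X)"
  unfolding G_iff using zp_neg_mem[OF p_pos] emb_neg by metis
lemma G_zero: "G 0"
  unfolding G_iff using zp_zero_mem[OF p_pos] emb_zero by metis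
lemma G_of_int_mult: "G X \<Longrightarrow> G (of_int k * X)"
  unfolding G_iff using zp_mul_mem[OF p_pos] zp_of_int_mem[OF p_pos] of_int_mult_emb by metis
lemma G_of_nat_mult: "G X \<Longrightarrow> G (of_nat k * X)"
  using G_of_int_mult[of X "int k"] by simp
lemma G_pow: "G X \<Longrightarrow> G (X ^ Suc k)"
  by (induction k) (auto intro: G_mul)

lemma G_ep: "G (ep p)"
proof -
  have "ep p = emb p (zp_of_int p 1)" unfolding ep_def zp_of_int_def using emb_modn[of p "\<lambda>n. 1"] by simp
  thus ?thesis using G_emb zp_of_int_mem[OF p_pos] by simp
qed

lemma ep_G: "G X \<Longrightarrow> ep p * X = X"
  unfolding G_iff using ep_mult by metis

lemmas G_intros = G_add G_sub G_mul G_neg G_zero G_of_int_mult G_of_nat_mult G_emb G_ep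

lemma zp_zero_iff: "x \<in> zp p \<Longrightarrow> x = zp_zero \<longleftrightarrow> emb p x = 0"
  using emb_inj[OF _ zp_zero_mem[OF p_pos], of x] emb_zero[of p] by simp

lemma zp_nonzero_wit:
  assumes "x \<in> zp p" "x \<noteq> zp_zero"
  shows "\<exists>i. x i = 0 \<and> x (Suc i) \<noteq> 0"
proof -
  have ex: "\<exists>n. x n \<noteq> 0" using assms(2) unfolding zp_zero_def by auto
  define n0 where "n0 = (LEAST n. x n \<noteq> 0)"
  have n0: "x n0 \<noteq> 0" unfolding n0_def using ex by (rule LeastI_ex)
  have x0: "x 0 = 0" using zp_bounds[OF assms(1), of 0] by simp
  have "n0 \<noteq> 0"
  proof
    assume "n0 = 0" thus False using n0 x0 by simp
  qed
  then obtain i where i: "n0 = Suc i" by (cases n0) auto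
  have "x i = 0" using not_less_Least[of i "\<lambda>n. x n \<noteq> 0"] i unfolding n0_def by auto
  thus ?thesis using n0 i by blast
qed

lemma val_dvd:
  assumes "x \<in> zp p" "x i = 0" "x (Suc i) \<noteq> 0" "Suc i \<le> m"
  shows "\<exists>a. x m = int p ^ i * a \<and> \<not> int p dvd a"
proof -
  have "x m mod int p ^ i = 0" using zp_coh[OF assms(1), of i m] assms by simp
  then obtain a where a: "x m = int p ^ i * a" by auto
  have "x m mod int p ^ Suc i \<noteq> 0" using zp_coh[OF assms(1), of "Suc i" m] assms by simp
  hence "\<not> int p ^ Suc i dvd x m" by auto
  hence "\<not> int p dvd a" using a by auto
  thus ?thesis using a by blast
qed

lemma zp_domain:
  assumes "x \<in> zp p" "y \<in> zp p" "zp_mul p x y = zp_zero"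
  shows "x = zp_zero \<or> y = zp_zero"
proof (rule ccontr)
  assume "\<not> ?thesis"
  then obtain i j where ij: "x i = 0" "x (Suc i) \<noteq> 0" "y j = 0" "y (Suc j) \<noteq> 0"
    using zp_nonzero_wit assms by metis
  define m where "m = Suc (i + j)"
  obtain a where a: "x m = int p ^ i * a" "\<not> int p dvd a"
    using val_dvd[OF assms(1) ij(1,2), of m] m_def by auto
  obtain b where b: "y m = int p ^ j * b" "\<not> int p dvd b"
    using val_dvd[OF assms(2) ij(3,4), of m] m_def by auto
  have "zp_mul p x y m = 0" using assms(3) by (simp add: zp_zero_def)
  hence "(x m * y m) mod int p ^ m = 0" by (simp add: zp_mul_def)
  hence "int p ^ m dvd x m * y m" by auto
  hence "int p ^ (i + j) * int p dvd int p ^ (i + j) * (a * b)"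
    using a b by (simp add: m_def power_add ac_simps)
  hence "int p dvd a * b" using p_pos by (subst (asm) dvd_mult_cancel_left) simp
  thus False using a b pint_prime prime_dvd_mult_iff by blast
qed

lemma G_domain: "G X \<Longrightarrow> G Y \<Longrightarrow> X * Y = 0 \<Longrightarrow> X = 0 \<or> Y = 0"
proof -
  assume "G X" "G Y" "X * Y = 0"
  then obtain x y where xy: "x \<in> zp p" "y \<in> zp p" "X = emb p x" "Y = emb p y" unfolding G_iff by blast
  hence "emb p (zp_mul p x y) = 0" using \<open>X * Y = 0\<close> emb_mul by metis
  hence "zp_mul p x y = zp_zero" using zp_zero_iff zp_mul_mem[OF p_pos xy(1,2)] by blast
  hence "x = zp_zero \<or> y = zp_zero" using zp_domain xy by blast
  thus ?thesis using xy emb_zero by metis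
qed

lemma G_cancel: "G X \<Longrightarrow> G Y \<Longrightarrow> G Z \<Longrightarrow> Z \<noteq> 0 \<Longrightarrow> Z * X = Z * Y \<Longrightarrow> X = Y"
proof -
  assume a: "G X" "G Y" "G Z" "Z \<noteq> 0" "Z * X = Z * Y"
  hence "Z * (X - Y) = 0" by (simp add: algebra_simps)
  hence "X - Y = 0" using G_domain[OF a(3) G_sub[OF a(1,2)]] a(4) by blast
  thus ?thesis by simp
qed

lemma of_int_nonzero:
  assumes "k \<noteq> 0" "\<bar>k\<bar> < int p ^ n" shows "of_int k * ep p \<noteq> 0"
proof
  assume "of_int k * ep p = 0"
  hence "rep (of_int k * ep p) p n = 0" by (simp add: zero_zt.rep_eq)
  hence "k mod int p ^ n = 0"
    by (simp add: times_zt.rep_eq rep_of_int ep_def emb.rep_eq mod_simps)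
  hence "int p ^ n dvd k" by auto
  hence "\<bar>int p ^ n\<bar> \<le> \<bar>k\<bar>" using assms(1) by (rule dvd_imp_le_int[rotated])
  thus False using assms(2) by simp
qed

end


lemma rep_pow: "rep (X ^ k) q n = (rep X q n) ^ k mod int q ^ n"
  by (induction k) (simp_all add: one_zt.rep_eq times_zt.rep_eq mod_simps)

lemmas rep_simps = plus_zt.rep_eq minus_zt.rep_eq uminus_zt.rep_eq times_zt.rep_eq zero_zt.rep_eq
  one_zt.rep_eq rep_of_int of_nat_rep rep_pow

context padic
begin

definition dv :: "nat \<Rightarrow> zt \<Rightarrow> bool" where "dv k X \<longleftrightarrow> rep X p k = 0"

lemma G_zp: "G X \<Longrightarrow> rep X p \<in> zp p" unfolding G_def by simp

lemma G_coh: "G X \<Longrightarrow> k \<le> m \<Longrightarrow> rep X p k = rep X p m mod int p ^ k"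
  using zp_coh[OF G_zp] by blast

lemma dv_add: "dv k X \<Longrightarrow> dv k Y \<Longrightarrow> dv k (X + Y)" unfolding dv_def by (simp add: rep_simps)
lemma dv_sub: "dv k X \<Longrightarrow> dv k Y \<Longrightarrow> dv k (X - Y)" unfolding dv_def by (simp add: rep_simps)
lemma dv_neg: "dv k X \<Longrightarrow> dv k (- X)" unfolding dv_def by (simp add: rep_simps)
lemma dv_multL: "dv k X \<Longrightarrow> dv k (Y * X)" unfolding dv_def by (simp add: rep_simps)
lemma dv_multR: "dv k X \<Longrightarrow> dv k (X * Y)" unfolding dv_def by (simp add: rep_simps)
lemma dv_zero: "dv k 0" unfolding dv_def by (simp add: rep_simps)
lemma dv_0: "dv 0 X" unfolding dv_def using rep_mod[of X p 0] by simp
lemma dv_ppow: "dv k (of_nat p ^ k * X)" unfolding dv_def by (simp add: rep_simps mod_simps)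
lemma dv_p: "dv 1 (of_nat p * X)" using dv_ppow[of 1 X] by simp

lemma dv_alt: "G X \<Longrightarrow> k \<le> m \<Longrightarrow> dv k X \<longleftrightarrow> int p ^ k dvd rep X p m"
  unfolding dv_def using G_coh[of X k m] by (simp add: dvd_eq_mod_eq_0)

lemma dv_mono: assumes "G X" "dv k X" "j \<le> k" shows "dv j X"
proof -
  have "int p ^ k dvd rep X p k" using dv_alt[OF assms(1), of k k] assms(2) by simp
  moreover have "int p ^ j dvd int p ^ k" using assms(3) by (simp add: le_imp_power_dvd)
  ultimately have "int p ^ j dvd rep X p k" using dvd_trans by blast
  thus ?thesis using dv_alt[OF assms(1) assms(3)] by simp
qed

lemma dv_mult:
  assumes "G X" "G Y" "dv i X" "dv j Y" shows "dv (i + j) (X * Y)"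
proof -
  have "int p ^ i dvd rep X p (i + j)" using dv_alt[OF assms(1), of i "i+j"] assms(3) by simp
  moreover have "int p ^ j dvd rep Y p (i + j)" using dv_alt[OF assms(2), of j "i+j"] assms(4) by simp
  ultimately have "int p ^ (i + j) dvd rep X p (i + j) * rep Y p (i + j)"
    by (simp add: power_add mult_dvd_mono)
  thus ?thesis unfolding dv_def by (simp add: rep_simps)
qed

lemma rho_bounds: "G X \<Longrightarrow> 0 \<le> rep X p 1 \<and> rep X p 1 < int p"
  using zp_bounds[OF G_zp, of X 1] by simp

lemma dv1_iff: "G X \<Longrightarrow> dv 1 X \<longleftrightarrow> int p dvd rep X p 1"
  using dv_alt[of X 1 1] by simp

lemma dv1_prime: assumes "G X" "G Y" "dv 1 (X * Y)" shows "dv 1 X \<or> dv 1 Y"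
proof -
  have "int p dvd rep (X * Y) p 1" using assms(3) unfolding dv_def by simp
  hence "int p dvd rep X p 1 * rep Y p 1" by (simp add: rep_simps dvd_eq_mod_eq_0)
  hence "int p dvd rep X p 1 \<or> int p dvd rep Y p 1" using pint_prime prime_dvd_mult_iff by blast
  thus ?thesis using dv1_iff assms(1,2) by blast
qed

lemma dv_coprime_cancel:
  assumes "G X" "coprime m (int p)" "dv k (of_int m * X)" shows "dv k X"
proof -
  have "int p ^ k dvd m * rep X p k"
    using assms(3) unfolding dv_def by (simp add: rep_simps dvd_eq_mod_eq_0 mod_simps)
  moreover have "coprime (int p ^ k) m" using assms(2) by (simp add: ac_simps)
  ultimately have "int p ^ k dvd rep X p k" using coprime_dvd_mult_right_iff by blast
  thus ?thesis unfolding dv_def using rep_mod[of X p k] by (simp add: dvd_eq_mod_eq_0)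
qed

lemma exists_big: "\<exists>n. \<bar>k\<bar> < int p ^ n"
proof -
  have "nat \<bar>k\<bar> < 2 ^ nat \<bar>k\<bar>" by (rule less_exp)
  also have "(2::nat) ^ nat \<bar>k\<bar> \<le> p ^ nat \<bar>k\<bar>" using p_gt1 by (simp add: power_mono)
  finally have "int (nat \<bar>k\<bar>) < int (p ^ nat \<bar>k\<bar>)" by linarith
  thus ?thesis by auto
qed

lemma of_int_ep_nonzero: "k \<noteq> 0 \<Longrightarrow> of_int k * ep p \<noteq> 0"
  using exists_big[of k] of_int_nonzero by blast

lemma G_cancel_int: "G X \<Longrightarrow> G Y \<Longrightarrow> k \<noteq> 0 \<Longrightarrow> of_int k * X = of_int k * Y \<Longrightarrow> X = Y"
proof -
  assume a: "G X" "G Y" "k \<noteq> 0" "of_int k * X = of_int k * Y"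
  have "(of_int k * ep p) * X = (of_int k * ep p) * Y"
    using a ep_G[OF a(1)] ep_G[OF a(2)] by (metis mult.assoc)
  thus ?thesis using G_cancel[OF a(1,2) G_of_int_mult[OF G_ep] of_int_ep_nonzero[OF a(3)]] by blast
qed

lemma G_cancel_p: "G X \<Longrightarrow> G Y \<Longrightarrow> of_nat p * X = of_nat p * Y \<Longrightarrow> X = Y"
  using G_cancel_int[of X Y "int p"] p_pos by simp

lemma zp_div:
  assumes "x \<in> zp p" "x k = 0"
  shows "(\<lambda>n. x (n + k) div int p ^ k) \<in> zp p \<and> (\<forall>n. x n = (int p ^ k * (x (n + k) div int p ^ k)) mod int p ^ n)"
proof -
  define y where "y = (\<lambda>n. x (n + k) div int p ^ k)"
  have dvdk: "int p ^ k dvd x m" if "k \<le> m" for m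
    using zp_coh[OF assms(1) that] assms(2) by (simp add: dvd_eq_mod_eq_0)
  have xy: "x (n + k) = int p ^ k * y n" for n
    using dvdk[of "n+k"] unfolding y_def by simp
  have "y \<in> zp p" unfolding zp_iff
  proof (intro allI conjI)
    fix n
    have b: "0 \<le> x (n + k)" "x (n + k) < int p ^ (n + k)" using zp_bounds[OF assms(1)] by auto
    show "0 \<le> y n" using b(1) xy[of n] ppow_pos[of k] by (simp add: zero_le_mult_iff)
    show "y n < int p ^ n" using b(2) xy[of n] ppow_pos[of k] by (simp add: power_add ac_simps)
    have "int p ^ k * y n = x (n + k)" using xy[of n] by simp
    also have "\<dots> = x (Suc n + k) mod (int p ^ k * int p ^ n)"
      using zp_step[OF assms(1), of "n+k"] by (simp add: power_add mult.commute)
    also have "x (Suc n + k) = int p ^ k * y (Suc n)" using xy[of "Suc n"] .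
    also have "(int p ^ k * y (Suc n)) mod (int p ^ k * int p ^ n) = int p ^ k * (y (Suc n) mod int p ^ n)"
      by (rule mod_mult_mult1)
    finally show "y n = y (Suc n) mod int p ^ n" using p_pos by simp
  qed
  moreover have "x n = (int p ^ k * y n) mod int p ^ n" for n
    using zp_coh[OF assms(1), of n "n + k"] xy[of n] by simp
  ultimately show ?thesis unfolding y_def by blast
qed

lemma dv_div: assumes "G X" "dv k X" shows "\<exists>Y. G Y \<and> X = of_nat p ^ k * Y"
proof -
  obtain x where x: "x \<in> zp p" "X = emb p x" using assms(1) G_iff by blast
  have "x k = 0" using assms(2) x unfolding dv_def by (simp add: emb.rep_eq zp_mod)
  from zp_div[OF x(1) this] obtain y where y: "y \<in> zp p" "\<And>n. x n = (int p ^ k * y n) mod int p ^ n" by blast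
  have "X = of_nat p ^ k * emb p y"
    using x y by (auto simp: fun_eq_iff rep_simps emb.rep_eq mod_simps intro!: rep_inject[THEN iffD1])
  thus ?thesis using G_emb[OF y(1)] by blast
qed

lemma dv_iff: "G X \<Longrightarrow> dv k X \<longleftrightarrow> (\<exists>Y. G Y \<and> X = of_nat p ^ k * Y)"
  using dv_div dv_ppow by blast

end


context padic
begin

lemma zp_cong1: "x \<in> zp p \<Longrightarrow> 1 \<le> n \<Longrightarrow> [x n = x 1] (mod int p)"
  using zp_coh[of x p 1 n] by (simp add: cong_def)

lemma zp_congn: "x \<in> zp p \<Longrightarrow> k \<le> n \<Longrightarrow> [x n = x k] (mod int p ^ k)"
  using zp_coh[of x p k n] by (simp add: cong_def)

lemma cong_inv_unique:
  fixes m x z z' :: int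
  assumes "[x * z = 1] (mod m)" "[x * z' = 1] (mod m)" shows "[z = z'] (mod m)"
proof -
  have "[z * (x * z') = z * 1] (mod m)" using assms(2) by (rule cong_mult[OF cong_refl])
  moreover have "[z' * (x * z) = z' * 1] (mod m)" using assms(1) by (rule cong_mult[OF cong_refl])
  moreover have "z * (x * z') = z' * (x * z)" by (simp add: ac_simps)
  ultimately show ?thesis by (metis cong_sym cong_trans mult.right_neutral)
qed

lemma zp_unit:
  assumes "x \<in> zp p" "x 1 \<noteq> 0"
  shows "\<exists>y\<in>zp p. zp_mul p x y = zp_of_int p 1"
proof -
  have cop: "coprime (x n) (int p ^ n)" for n
  proof (cases "n = 0")
    case True thus ?thesis by simp
  next
    case False
    have "[x n = x 1] (mod int p)" using zp_cong1[OF assms(1)] False by simp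
    moreover have "\<not> int p dvd x 1"
    proof
      assume "int p dvd x 1"
      moreover have "0 < x 1" "x 1 < int p" using assms(2) zp_bounds[OF assms(1), of 1] by auto
      ultimately show False using zdvd_imp_le[of "int p" "x 1"] by simp
    qed
    ultimately have "\<not> int p dvd x n" using cong_dvd_iff by blast
    hence "coprime (int p) (x n)" using pint_prime prime_imp_coprime by blast
    thus ?thesis by (simp add: ac_simps)
  qed
  define iv where "iv n = (SOME z. [x n * z = 1] (mod int p ^ n))" for n
  have iv: "[x n * iv n = 1] (mod int p ^ n)" for n
    using someI_ex[OF cong_solve_coprime_int[OF cop[of n]]] by (simp add: iv_def)
  have coh: "[iv n = iv (Suc n)] (mod int p ^ n)" for n
  proof -
    have "[x (Suc n) * iv (Suc n) = 1] (mod int p ^ n)"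
      using iv[of "Suc n"] by (rule cong_dvd_modulus) (simp add: le_imp_power_dvd)
    moreover have "[x n = x (Suc n)] (mod int p ^ n)" using zp_cong[OF assms(1)] .
    ultimately have "[x n * iv (Suc n) = x (Suc n) * iv (Suc n)] (mod int p ^ n)"
      by (intro cong_mult cong_refl)
    hence "[x n * iv (Suc n) = 1] (mod int p ^ n)" using \<open>[x (Suc n) * iv (Suc n) = 1] (mod int p ^ n)\<close>
      by (rule cong_trans)
    thus ?thesis using iv[of n] cong_inv_unique by blast
  qed
  define y where "y = (\<lambda>n. iv n mod int p ^ n)"
  have "y \<in> zp p" unfolding y_def using coh by (intro zp_intro p_pos)
  moreover have "zp_mul p x y = zp_of_int p 1"
    unfolding zp_mul_def zp_of_int_def y_def
  proof (rule ext)
    fix n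
    have "(x n * (iv n mod int p ^ n)) mod int p ^ n = (x n * iv n) mod int p ^ n" by (simp add: mod_simps)
    also have "\<dots> = 1 mod int p ^ n" using iv[of n] unfolding cong_def .
    finally show "(x n * (iv n mod int p ^ n)) mod int p ^ n = 1 mod int p ^ n" .
  qed
  ultimately show ?thesis by blast
qed

lemma G_unit: assumes "G X" "\<not> dv 1 X" shows "\<exists>Y. G Y \<and> X * Y = ep p"
proof -
  obtain x where x: "x \<in> zp p" "X = emb p x" using assms(1) G_iff by blast
  have "x 1 \<noteq> 0" using assms(2) x unfolding dv_def by (simp add: emb.rep_eq zp_mod)
  then obtain y where y: "y \<in> zp p" "zp_mul p x y = zp_of_int p 1" using zp_unit x(1) by blast
  have "X * emb p y = emb p (zp_mul p x y)" using x emb_mul[of p x y] by simp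
  also have "\<dots> = emb p (\<lambda>n. 1 mod int p ^ n)" using y(2) unfolding zp_of_int_def by simp
  also have "\<dots> = ep p" unfolding ep_def by (rule emb_modn)
  finally have "X * emb p y = ep p" .
  thus ?thesis using G_emb[OF y(1)] by blast
qed

end


context padic
begin

lemma coprime_p_of_cong:
  fixes u v :: int
  assumes "[u = v] (mod int p)" "\<not> int p dvd v" shows "coprime u (int p)"
proof -
  have "\<not> int p dvd u" using assms cong_dvd_iff by blast
  hence "coprime (int p) u" using pint_prime prime_imp_coprime by blast
  thus ?thesis by (simp add: ac_simps)
qed

lemma hensel:
  assumes a: "a \<in> zp p" and c: "c \<in> zp p"
    and r0: "int p dvd r0^2 - a 1 * r0 - c 1" and d0: "\<not> int p dvd 2 * r0 - a 1"
  shows "\<exists>\<mu>\<in>zp p. \<forall>n. (\<mu> n * \<mu> n - a n * \<mu> n - c n) mod int p ^ n = 0"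
proof -
  define S where "S n z \<longleftrightarrow> int p ^ n dvd z^2 - a n * z - c n \<and> [z = r0] (mod int p)" for n z
  have congA: "[a (Suc n) = a n] (mod int p ^ n)" "[c (Suc n) = c n] (mod int p ^ n)" for n
    using zp_congn[OF a, of n "Suc n"] zp_congn[OF c, of n "Suc n"] by auto
  have Fcong: "[z^2 - a (Suc n) * z - c (Suc n) = z^2 - a n * z - c n] (mod int p ^ n)" for n z
    using congA[of n] by (intro cong_diff cong_mult cong_refl) auto
  have dcong: "[2 * z - a m = 2 * r0 - a 1] (mod int p)" if "[z = r0] (mod int p)" "1 \<le> m" for z m
    using that zp_cong1[OF a that(2)] by (intro cong_diff cong_mult cong_refl) auto
  have ex: "\<exists>z. S n z" if "1 \<le> n" for n
    using that
  proof (induction n rule: nat_induct_at_least)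
    case base
    have "S 1 r0" unfolding S_def using r0 by simp
    thus ?case by blast
  next
    case (Suc n)
    then obtain z where z: "S n z" by blast
    define A where "A = a (Suc n)"
    define C where "C = c (Suc n)"
    have "int p ^ n dvd z^2 - A * z - C"
      using z Fcong[of z n] cong_dvd_iff unfolding S_def A_def C_def by blast
    then obtain k where k: "z^2 - A * z - C = int p ^ n * k" by blast
    define d where "d = 2 * z - A"
    have "[d = 2 * r0 - a 1] (mod int p)" unfolding d_def A_def using dcong z unfolding S_def by simp
    hence "coprime d (int p)" using coprime_p_of_cong d0 by blast
    then obtain di where di: "[d * di = 1] (mod int p)" using cong_solve_coprime_int by blast
    define t where "t = - k * di"
    define z' where "z' = z + int p ^ n * t"
    have id: "z'^2 - A * z' - C = (z^2 - A * z - C) + int p ^ n * (t * d) + (int p ^ n)^2 * t^2"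
      unfolding z'_def d_def by (simp add: power2_eq_square algebra_simps)
    have "int p dvd d * di - 1" using di by (simp add: cong_iff_dvd_diff)
    hence "int p dvd k * (d * di - 1)" by simp
    moreover have "k + t * d = - (k * (d * di - 1))" unfolding t_def by (simp add: algebra_simps)
    ultimately have kt: "int p dvd k + t * d" by simp
    have "int p ^ Suc n dvd int p ^ n * (k + t * d)" using kt by (simp add: mult_dvd_mono)
    moreover have "int p ^ Suc n dvd (int p ^ n)^2 * t^2"
    proof -
      have "Suc n \<le> 2 * n" using Suc(1) by linarith
      hence "int p ^ Suc n dvd int p ^ (2 * n)" by (rule le_imp_power_dvd)
      thus ?thesis by (simp add: power_mult[symmetric] mult.commute)
    qed
    ultimately have "int p ^ Suc n dvd int p ^ n * (k + t * d) + (int p ^ n)^2 * t^2"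
      by (rule dvd_add)
    moreover have "z'^2 - A * z' - C = int p ^ n * (k + t * d) + (int p ^ n)^2 * t^2"
      unfolding id k by (simp add: algebra_simps)
    ultimately have "int p ^ Suc n dvd z'^2 - A * z' - C" by simp
    moreover have "[z' = r0] (mod int p)"
    proof -
      have "int p dvd int p ^ n * t" using Suc(1) by (simp add: dvd_mult2 dvd_power)
      hence "[z' = z] (mod int p)" unfolding z'_def by (simp add: cong_iff_dvd_diff)
      thus ?thesis using z unfolding S_def using cong_trans by blast
    qed
    ultimately have "S (Suc n) z'" unfolding S_def A_def C_def by simp
    thus ?case by blast
  qed
  have uniq: "[z = z'] (mod int p ^ n)" if "1 \<le> n" "S n z" "S n z'" for n z z'
  proof -
    have e: "(z^2 - a n * z - c n) - (z'^2 - a n * z' - c n) = (z - z') * (z + z' - a n)"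
      by (simp add: power2_eq_square algebra_simps)
    have "int p ^ n dvd (z^2 - a n * z - c n) - (z'^2 - a n * z' - c n)"
      using that(2,3) unfolding S_def by (blast intro: dvd_diff)
    hence "int p ^ n dvd (z - z') * (z + z' - a n)" by (simp only: e)
    moreover have "[z + z' - a n = 2 * r0 - a 1] (mod int p)"
    proof -
      have "[z + z' = r0 + r0] (mod int p)" using that(2,3) unfolding S_def by (blast intro: cong_add)
      hence "[z + z' - a n = (r0 + r0) - a 1] (mod int p)"
        using zp_cong1[OF a that(1)] by (rule cong_diff)
      thus ?thesis by (metis mult_2)
    qed
    hence "coprime (z + z' - a n) (int p)" using coprime_p_of_cong d0 by blast
    hence "coprime (int p ^ n) (z + z' - a n)" by (simp add: ac_simps)
    ultimately have "int p ^ n dvd z - z'" using coprime_dvd_mult_left_iff by blast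
    thus ?thesis by (simp add: cong_iff_dvd_diff)
  qed
  define g where "g n = (if n = 0 then 0 else (SOME z. S n z))" for n
  have gS: "S n (g n)" if "1 \<le> n" for n
    using someI_ex[OF ex[OF that]] that by (simp add: g_def)
  have coh: "[g n = g (Suc n)] (mod int p ^ n)" for n
  proof (cases "n = 0")
    case True thus ?thesis by (simp add: cong_def)
  next
    case False
    hence n1: "1 \<le> n" by simp
    have s1: "S (Suc n) (g (Suc n))" using gS by simp
    have "S n (g (Suc n))"
    proof -
      have "int p ^ n dvd int p ^ Suc n" by (simp add: le_imp_power_dvd)
      hence "int p ^ n dvd (g (Suc n))^2 - a (Suc n) * g (Suc n) - c (Suc n)"
        using s1 unfolding S_def using dvd_trans by blast
      hence "int p ^ n dvd (g (Suc n))^2 - a n * g (Suc n) - c n"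
        using Fcong[of "g (Suc n)" n] cong_dvd_iff by blast
      thus ?thesis using s1 unfolding S_def by simp
    qed
    thus ?thesis using uniq[OF n1 gS[OF n1]] by blast
  qed
  define mu where "mu = (\<lambda>n. g n mod int p ^ n)"
  have "mu \<in> zp p" unfolding mu_def using coh by (intro zp_intro p_pos)
  moreover have "(mu n * mu n - a n * mu n - c n) mod int p ^ n = 0" for n
  proof (cases "n = 0")
    case True thus ?thesis by simp
  next
    case False
    hence "S n (g n)" using gS by simp
    hence "int p ^ n dvd g n * g n - a n * g n - c n" unfolding S_def by (simp add: power2_eq_square)
    hence "(g n * g n - a n * g n - c n) mod int p ^ n = 0" by (simp add: dvd_eq_mod_eq_0)
    moreover have "[mu n * mu n - a n * mu n - c n = g n * g n - a n * g n - c n] (mod int p ^ n)"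
      unfolding mu_def by (intro cong_diff cong_mult cong_refl) (auto simp: cong_def)
    ultimately show ?thesis unfolding cong_def by simp
  qed
  ultimately show ?thesis by blast
qed

end


context padic
begin

definition engineQ :: "zt \<Rightarrow> zt \<Rightarrow> zt \<Rightarrow> zt \<Rightarrow> zt \<Rightarrow> zt \<Rightarrow> (zt \<Rightarrow> zt \<Rightarrow> bool) \<Rightarrow> bool" where
  "engineQ A C P11 P12 P21 P22 Q \<longleftrightarrow>
    (\<forall>X1 X2. G X1 \<longrightarrow> G X2 \<longrightarrow> Q X1 X2 \<longrightarrow> dv 1 X1 \<and> dv 1 X2) \<and> Q 0 0 \<and>
    (\<forall>X1 X2 Y1 Y2. G X1 \<longrightarrow> G X2 \<longrightarrow> G Y1 \<longrightarrow> G Y2 \<longrightarrow> Q X1 X2 \<longrightarrow> Q Y1 Y2 \<longrightarrow> Q (X1 + Y1) (X2 + Y2)) \<and>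
    (\<forall>R X1 X2. G R \<longrightarrow> G X1 \<longrightarrow> G X2 \<longrightarrow> Q X1 X2 \<longrightarrow> Q (R * X1) (R * X2)) \<and>
    (\<forall>X1 X2. G X1 \<longrightarrow> G X2 \<longrightarrow> Q X1 X2 \<longrightarrow> Q (A * X1 + X2) (C * X1)) \<and>
    (\<exists>X1 X2. G X1 \<and> G X2 \<and> Q X1 X2 \<and> (X1 \<noteq> 0 \<or> X2 \<noteq> 0)) \<and>
    (\<forall>V1 V2. G V1 \<longrightarrow> G V2 \<longrightarrow> Q (of_nat p * V1) (of_nat p * V2) \<longrightarrow>
        Q (V1 * P11 + V2 * P12) (V1 * P21 + V2 * P22))"

lemma G_p: "G X \<Longrightarrow> G (of_nat p * X)" by (rule G_of_nat_mult)

lemma pep_nonzero: "of_nat p * ep p \<noteq> 0"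
  using of_int_ep_nonzero[of "int p"] p_pos by simp

lemma p_nonzero_mult: "G V \<Longrightarrow> V \<noteq> 0 \<Longrightarrow> of_nat p * V \<noteq> 0"
proof
  assume a: "G V" "V \<noteq> 0" "of_nat p * V = 0"
  hence "(of_nat p * ep p) * V = 0" using ep_G[OF a(1)] by (metis mult.assoc)
  thus False using G_domain[OF G_p[OF G_ep] a(1)] pep_nonzero a(2) by blast
qed

lemma dv_cancel_p: assumes "G V" "dv (Suc k) (of_nat p * V)" shows "dv k V"
proof -
  have "(int p * rep V p (Suc k)) mod int p ^ Suc k = 0"
    using assms(2) unfolding dv_def by (simp add: rep_simps mod_simps)
  hence "int p * int p ^ k dvd int p * rep V p (Suc k)" by (simp add: dvd_eq_mod_eq_0)
  hence "int p ^ k dvd rep V p (Suc k)" using p_pos by simp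
  thus ?thesis using dv_alt[OF assms(1), of k "Suc k"] by simp
qed

lemma dv_two_cancel: assumes "G X" "p \<noteq> 2" "dv k (2 * X)" shows "dv k X"
proof -
  have "p > 2" using p_gt1 assms(2) by simp
  hence "odd p" using pp prime_odd_nat by blast
  hence "\<not> (2::int) dvd int p" by simp
  hence "coprime (2::int) (int p)" using prime_imp_coprime[of "2::int" "int p"] by simp
  moreover have "dv k (of_int 2 * X)" using assms(3) by simp
  ultimately show ?thesis using dv_coprime_cancel[OF assms(1)] by blast
qed

lemma G_numeral_mult: "G X \<Longrightarrow> G (numeral k * X)"
  using G_of_int_mult[of X "numeral k"] by simp

lemmas G_intros2 = G_intros G_numeral_mult

lemma dv_mult11: "G X \<Longrightarrow> G Y \<Longrightarrow> dv 1 X \<Longrightarrow> dv 1 Y \<Longrightarrow> dv 2 (X * Y)"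
  using dv_mult[of X Y 1 1] unfolding one_add_one by blast

lemma dv_cancel_p2: "G V \<Longrightarrow> dv 2 (of_nat p * V) \<Longrightarrow> dv 1 V"
  using dv_cancel_p[of V 1] unfolding numeral_2_eq_2 by simp

lemma dv_21: "G X \<Longrightarrow> dv 2 X \<Longrightarrow> dv 1 X"
  using dv_mono[of X 2 1] by simp

lemma engineQI:
  assumes "\<And>X1 X2. G X1 \<Longrightarrow> G X2 \<Longrightarrow> Q X1 X2 \<Longrightarrow> dv 1 X1 \<and> dv 1 X2"
    and "Q 0 0"
    and "\<And>X1 X2 Y1 Y2. G X1 \<Longrightarrow> G X2 \<Longrightarrow> G Y1 \<Longrightarrow> G Y2 \<Longrightarrow> Q X1 X2 \<Longrightarrow> Q Y1 Y2 \<Longrightarrow> Q (X1 + Y1) (X2 + Y2)"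
    and "\<And>R X1 X2. G R \<Longrightarrow> G X1 \<Longrightarrow> G X2 \<Longrightarrow> Q X1 X2 \<Longrightarrow> Q (R * X1) (R * X2)"
    and "\<And>X1 X2. G X1 \<Longrightarrow> G X2 \<Longrightarrow> Q X1 X2 \<Longrightarrow> Q (A * X1 + X2) (C * X1)"
    and "\<exists>X1 X2. G X1 \<and> G X2 \<and> Q X1 X2 \<and> (X1 \<noteq> 0 \<or> X2 \<noteq> 0)"
    and "\<And>V1 V2. G V1 \<Longrightarrow> G V2 \<Longrightarrow> Q (of_nat p * V1) (of_nat p * V2) \<Longrightarrow>
        Q (V1 * P11 + V2 * P12) (V1 * P21 + V2 * P22)"
  shows "engineQ A C P11 P12 P21 P22 Q"
  unfolding engineQ_def using assms by blast

lemma K2: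
  assumes d: "dv 1 P11" "dv 1 P12" "dv 1 P21" "dv 1 P22"
  shows "engineQ A C P11 P12 P21 P22 (\<lambda>X1 X2. dv 1 X1 \<and> dv 1 X2)"
proof (rule engineQI)
  have "G (of_nat p * ep p)" by (intro G_intros)
  thus "\<exists>X1 X2. G X1 \<and> G X2 \<and> (dv 1 X1 \<and> dv 1 X2) \<and> (X1 \<noteq> 0 \<or> X2 \<noteq> 0)"
    using pep_nonzero dv_p[of "ep p"] dv_zero G_zero by blast
qed (use d in \<open>auto intro!: dv_add dv_multL dv_zero\<close>)

lemma K4:
  assumes g: "G C" "G P11" "G P12" "G P21" "G P22"
    and d: "dv 1 C" "dv 1 P11" "dv 2 P21" "dv 1 P22"
  shows "engineQ A C P11 P12 P21 P22 (\<lambda>X1 X2. dv 1 X1 \<and> dv 2 X2)"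
proof (rule engineQI)
  have "G (of_nat p * ep p)" by (intro G_intros)
  thus "\<exists>X1 X2. G X1 \<and> G X2 \<and> (dv 1 X1 \<and> dv 2 X2) \<and> (X1 \<noteq> 0 \<or> X2 \<noteq> 0)"
    using pep_nonzero dv_p[of "ep p"] dv_zero G_zero by blast
next
  fix X1 X2 assume "G X1" "G X2" "dv 1 X1 \<and> dv 2 X2"
  thus "dv 1 X1 \<and> dv 1 X2" using dv_21 by blast
next
  fix X1 X2 assume that: "G X1" "G X2" "dv 1 X1 \<and> dv 2 X2"
  have "dv 1 X2" using that dv_21 by blast
  moreover have "dv 2 (C * X1)" using dv_mult11[OF g(1) that(1)] d(1) that(3) by blast
  ultimately show "dv 1 (A * X1 + X2) \<and> dv 2 (C * X1)" using that by (blast intro: dv_add dv_multL)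
next
  fix V1 V2 assume that: "G V1" "G V2" "dv 1 (of_nat p * V1) \<and> dv 2 (of_nat p * V2)"
  have v2: "dv 1 V2" using dv_cancel_p2[OF that(2)] that(3) by blast
  have "dv 2 (V2 * P22)" using dv_mult11[OF that(2) g(5) v2 d(4)] .
  moreover have "dv 2 (V1 * P21)" using d(3) by (rule dv_multL)
  moreover have "dv 1 (V1 * P11)" using d(2) by (rule dv_multL)
  moreover have "dv 1 (V2 * P12)" using v2 by (rule dv_multR)
  ultimately show "dv 1 (V1 * P11 + V2 * P12) \<and> dv 2 (V1 * P21 + V2 * P22)"
    by (blast intro: dv_add)
qed (auto intro!: dv_add dv_multL dv_zero)

lemma K3:
  assumes g: "G A" "G C" "G Mu" "G w" "G y" "G k"
    and mu: "Mu * Mu = A * Mu + C"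
    and P: "P11 = A * y + w" "P12 = y" "P21 = C * y" "P22 = w"
    and wk: "w + y * Mu = of_nat p * k"
  shows "engineQ A C P11 P12 P21 P22
     (\<lambda>X1 X2. \<exists>R. G R \<and> X1 = of_nat p * R \<and> X2 = of_nat p * (R * (Mu - A)))"
proof (rule engineQI)
  show "\<exists>R. G R \<and> (0::zt) = of_nat p * R \<and> (0::zt) = of_nat p * (R * (Mu - A))"
    using G_zero by (intro exI[of _ 0]) simp
next
  fix X1 X2 assume "\<exists>R. G R \<and> X1 = of_nat p * R \<and> X2 = of_nat p * (R * (Mu - A))"
  thus "dv 1 X1 \<and> dv 1 X2" using dv_p by blast
next
  fix X1 X2 Y1 Y2
  assume "\<exists>R. G R \<and> X1 = of_nat p * R \<and> X2 = of_nat p * (R * (Mu - A))"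
    "\<exists>R. G R \<and> Y1 = of_nat p * R \<and> Y2 = of_nat p * (R * (Mu - A))"
  then obtain R S where r: "G R" "X1 = of_nat p * R" "X2 = of_nat p * (R * (Mu - A))"
    and s: "G S" "Y1 = of_nat p * S" "Y2 = of_nat p * (S * (Mu - A))" by blast
  have "G (R + S)" using r s by (intro G_intros)
  moreover have "X1 + Y1 = of_nat p * (R + S)" by (simp add: r s algebra_simps)
  moreover have "X2 + Y2 = of_nat p * ((R + S) * (Mu - A))" by (simp add: r s algebra_simps)
  ultimately show "\<exists>R. G R \<and> X1 + Y1 = of_nat p * R \<and> X2 + Y2 = of_nat p * (R * (Mu - A))" by blast
next
  fix R0 X1 X2
  assume "G R0" "\<exists>R. G R \<and> X1 = of_nat p * R \<and> X2 = of_nat p * (R * (Mu - A))"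
  then obtain R where r: "G R" "X1 = of_nat p * R" "X2 = of_nat p * (R * (Mu - A))" by blast
  have "G (R0 * R)" using r \<open>G R0\<close> by (intro G_intros)
  moreover have "R0 * X1 = of_nat p * (R0 * R)" by (simp add: r algebra_simps)
  moreover have "R0 * X2 = of_nat p * ((R0 * R) * (Mu - A))" by (simp add: r algebra_simps)
  ultimately show "\<exists>R. G R \<and> R0 * X1 = of_nat p * R \<and> R0 * X2 = of_nat p * (R * (Mu - A))" by blast
next
  fix X1 X2
  assume "\<exists>R. G R \<and> X1 = of_nat p * R \<and> X2 = of_nat p * (R * (Mu - A))"
  then obtain R where r: "G R" "X1 = of_nat p * R" "X2 = of_nat p * (R * (Mu - A))" by blast
  have "G (R * Mu)" using r g by (intro G_intros)
  moreover have "A * X1 + X2 = of_nat p * (R * Mu)" by (simp add: r algebra_simps)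
  moreover have "C * X1 = of_nat p * ((R * Mu) * (Mu - A))"
  proof -
    have "R * Mu * (Mu - A) = R * (Mu * Mu) - R * A * Mu" by (simp add: algebra_simps)
    also have "\<dots> = R * C" unfolding mu by (simp add: algebra_simps)
    finally show ?thesis by (simp add: r algebra_simps)
  qed
  ultimately show "\<exists>R. G R \<and> A * X1 + X2 = of_nat p * R \<and> C * X1 = of_nat p * (R * (Mu - A))" by blast
next
  have "G (ep p)" "G (of_nat p * ep p)" "G (of_nat p * (ep p * (Mu - A)))" using g by (intro G_intros)+
  moreover have "of_nat p * ep p \<noteq> 0" by (rule pep_nonzero)
  ultimately show "\<exists>X1 X2. G X1 \<and> G X2 \<and> (\<exists>R. G R \<and> X1 = of_nat p * R \<and> X2 = of_nat p * (R * (Mu - A)))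
      \<and> (X1 \<noteq> 0 \<or> X2 \<noteq> 0)" by blast
next
  fix V1 V2 assume v: "G V1" "G V2"
    "\<exists>R. G R \<and> of_nat p * V1 = of_nat p * R \<and> of_nat p * V2 = of_nat p * (R * (Mu - A))"
  then obtain R where r: "G R" "of_nat p * V1 = of_nat p * R" "of_nat p * V2 = of_nat p * (R * (Mu - A))"
    by blast
  have gr: "G (R * (Mu - A))" using r g by (intro G_intros)
  have V1: "V1 = R" using G_cancel_p[OF v(1) r(1) r(2)] .
  have V2: "V2 = R * (Mu - A)" using G_cancel_p[OF v(2) gr r(3)] .
  have y1: "V1 * P11 + V2 * P12 = of_nat p * (R * k)"
  proof -
    have "V1 * P11 + V2 * P12 = R * (w + y * Mu)" unfolding V1 V2 P by (simp add: algebra_simps)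
    thus ?thesis unfolding wk by (simp add: algebra_simps)
  qed
  have y2: "V1 * P21 + V2 * P22 = of_nat p * ((R * k) * (Mu - A))"
  proof -
    have "(w + y * Mu) * (Mu - A) = w * Mu - w * A + y * (Mu * Mu) - y * A * Mu" by (simp add: algebra_simps)
    also have "\<dots> = w * Mu - w * A + y * C" unfolding mu by (simp add: algebra_simps)
    finally have e: "(w + y * Mu) * (Mu - A) = w * Mu - w * A + y * C" .
    have "V1 * P21 + V2 * P22 = R * (w * Mu - w * A + y * C)" unfolding V1 V2 P by (simp add: algebra_simps)
    also have "\<dots> = R * ((w + y * Mu) * (Mu - A))" unfolding e ..
    also have "\<dots> = of_nat p * ((R * k) * (Mu - A))" unfolding wk by (simp add: algebra_simps)
    finally show ?thesis .
  qed
  have "G (R * k)" using r g by (intro G_intros)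
  thus "\<exists>R'. G R' \<and> V1 * P11 + V2 * P12 = of_nat p * R' \<and> V1 * P21 + V2 * P22 = of_nat p * (R' * (Mu - A))"
    using y1 y2 by blast
qed

lemma K5:
  assumes p2: "p \<noteq> 2"
    and g: "G A" "G C" "G w" "G y"
    and dD: "dv 2 (4 * C + A * A)"
    and P: "P11 = A * y + w" "P12 = y" "P21 = C * y" "P22 = w"
    and dw: "dv 1 (2 * w + A * y)"
  shows "engineQ A C P11 P12 P21 P22 (\<lambda>X1 X2. dv 1 X1 \<and> dv 2 (2 * X2 + A * X1))"
proof -
  have x2: "dv 1 X2" if "G X1" "G X2" "dv 1 X1" "dv 2 (2 * X2 + A * X1)" for X1 X2
  proof -
    have "G (2 * X2 + A * X1)" using that g by (intro G_intros2)
    hence "dv 1 (2 * X2 + A * X1)" using dv_21 that(4) by blast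
    moreover have "dv 1 (A * X1)" using that(3) by (rule dv_multL)
    ultimately have "dv 1 ((2 * X2 + A * X1) - A * X1)" by (rule dv_sub)
    hence "dv 1 (2 * X2)" by simp
    thus ?thesis using dv_two_cancel[OF that(2) p2] by blast
  qed
  show ?thesis
proof (rule engineQI)
  fix X1 X2 assume "G X1" "G X2" "dv 1 X1 \<and> dv 2 (2 * X2 + A * X1)"
  thus "dv 1 X1 \<and> dv 1 X2" using x2 by blast
next
  show "dv 1 (0::zt) \<and> dv 2 (2 * 0 + A * 0)" using dv_zero by simp
next
  fix X1 X2 Y1 Y2 assume "G X1" "G X2" "G Y1" "G Y2" "dv 1 X1 \<and> dv 2 (2 * X2 + A * X1)"
    "dv 1 Y1 \<and> dv 2 (2 * Y2 + A * Y1)"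
  moreover have e: "2 * (X2 + Y2) + A * (X1 + Y1) = (2 * X2 + A * X1) + (2 * Y2 + A * Y1)"
    by (simp add: algebra_simps)
  ultimately show "dv 1 (X1 + Y1) \<and> dv 2 (2 * (X2 + Y2) + A * (X1 + Y1))"
    unfolding e by (blast intro: dv_add)
next
  fix R X1 X2 assume "G R" "G X1" "G X2" "dv 1 X1 \<and> dv 2 (2 * X2 + A * X1)"
  moreover have e: "2 * (R * X2) + A * (R * X1) = R * (2 * X2 + A * X1)"
    by (simp add: algebra_simps)
  ultimately show "dv 1 (R * X1) \<and> dv 2 (2 * (R * X2) + A * (R * X1))"
    unfolding e by (blast intro: dv_multL)
next
  fix X1 X2 assume a: "G X1" "G X2" "dv 1 X1 \<and> dv 2 (2 * X2 + A * X1)"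
  have "dv 1 X2" using x2 a by blast
  hence d1: "dv 1 (A * X1 + X2)" using a by (blast intro: dv_add dv_multL)
  have "G (2 * (C * X1) + A * (A * X1 + X2))" using a g by (intro G_intros2)
  moreover have "2 * (2 * (C * X1) + A * (A * X1 + X2)) = (4 * C + A * A) * X1 + A * (2 * X2 + A * X1)"
    by (simp add: algebra_simps)
  moreover have "dv 2 ((4 * C + A * A) * X1 + A * (2 * X2 + A * X1))"
    using dD a by (blast intro: dv_add dv_multL dv_multR)
  ultimately have "dv 2 (2 * (C * X1) + A * (A * X1 + X2))" using dv_two_cancel p2 by metis
  thus "dv 1 (A * X1 + X2) \<and> dv 2 (2 * (C * X1) + A * (A * X1 + X2))" using d1 by blast
next
  have gx: "G (of_nat p * (of_nat p * ep p))" by (intro G_intros)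
  have "of_nat p * (of_nat p * ep p) = of_int (int p * int p) * ep p" by simp
  hence nz: "of_nat p * (of_nat p * ep p) \<noteq> 0" using of_int_ep_nonzero[of "int p * int p"] p_pos by (simp add: mult.assoc)
  have "2 * (of_nat p * (of_nat p * ep p)) + A * 0 = of_nat p ^ 2 * (2 * ep p)"
    by (simp add: algebra_simps power2_eq_square)
  hence "dv 2 (2 * (of_nat p * (of_nat p * ep p)) + A * 0)" using dv_ppow by simp
  thus "\<exists>X1 X2. G X1 \<and> G X2 \<and> (dv 1 X1 \<and> dv 2 (2 * X2 + A * X1)) \<and> (X1 \<noteq> 0 \<or> X2 \<noteq> 0)"
    using gx nz G_zero dv_zero by blast
next
  fix V1 V2 assume v: "G V1" "G V2" "dv 1 (of_nat p * V1) \<and> dv 2 (2 * (of_nat p * V2) + A * (of_nat p * V1))"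
  define S where "S = 2 * V2 + A * V1"
  have gS: "G S" unfolding S_def using v g by (intro G_intros2)
  have "2 * (of_nat p * V2) + A * (of_nat p * V1) = of_nat p * S" unfolding S_def by (simp add: algebra_simps)
  hence dS: "dv 1 S" using v(3) dv_cancel_p2[OF gS] by simp
  define Y1 where "Y1 = V1 * P11 + V2 * P12"
  define Y2 where "Y2 = V1 * P21 + V2 * P22"
  have gY1: "G Y1" unfolding Y1_def P using v g by (intro G_intros)
  have gY2: "G Y2" unfolding Y2_def P using v g by (intro G_intros)
  note gY = gY1 gY2
  have "2 * Y1 = V1 * (2 * w + A * y) + y * S" unfolding Y1_def S_def P by (simp add: algebra_simps)
  moreover have "dv 1 (V1 * (2 * w + A * y) + y * S)" using dw dS by (blast intro: dv_add dv_multL)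
  ultimately have dY1: "dv 1 Y1" using dv_two_cancel[OF gY(1) p2] by metis
  have "2 * (2 * Y2 + A * Y1) = (V1 * y) * (4 * C + A * A) + S * (2 * w + A * y)"
    unfolding Y1_def Y2_def S_def P by (simp add: algebra_simps)
  moreover have "dv 2 ((V1 * y) * (4 * C + A * A) + S * (2 * w + A * y))"
  proof (rule dv_add)
    show "dv 2 ((V1 * y) * (4 * C + A * A))" using dD by (rule dv_multL)
    have "G (2 * w + A * y)" using g by (intro G_intros2)
    thus "dv 2 (S * (2 * w + A * y))" using dv_mult11[OF gS _ dS dw] by blast
  qed
  moreover have "G (2 * Y2 + A * Y1)" using gY g by (intro G_intros2)
  ultimately have "dv 2 (2 * Y2 + A * Y1)" using dv_two_cancel p2 by metis
  thus "dv 1 (V1 * P11 + V2 * P12) \<and> dv 2 (2 * (V1 * P21 + V2 * P22) + A * (V1 * P11 + V2 * P12))"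
    using dY1 unfolding Y1_def Y2_def by blast
qed
qed

lemma K1:
  assumes g: "G A" "G C" "G l" "G P11" "G P12" "G P21" "G P22"
    and H1a: "\<And>V1 V2. G V1 \<Longrightarrow> G V2 \<Longrightarrow>
       of_nat p * ((A * V1 + V2) * P11 + (C * V1) * P12) = l * (A * (V1 * P11 + V2 * P12) + (V1 * P21 + V2 * P22))"
    and H1b: "\<And>V1 V2. G V1 \<Longrightarrow> G V2 \<Longrightarrow>
       of_nat p * ((A * V1 + V2) * P21 + (C * V1) * P22) = l * (C * (V1 * P11 + V2 * P12))"
    and det: "P11 * P22 - P12 * P21 = 0"
  shows "engineQ A C P11 P12 P21 P22 (\<lambda>X1 X2. \<exists>V1 V2. G V1 \<and> G V2 \<and> X1 = of_nat p * V1 \<and>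
      X2 = of_nat p * V2 \<and> V1 * P11 + V2 * P12 = 0 \<and> V1 * P21 + V2 * P22 = 0)"
    (is "engineQ A C P11 P12 P21 P22 ?Q")
proof (rule engineQI)
  show "?Q 0 0" using G_zero by (intro exI[of _ 0]) simp
next
  fix X1 X2 assume "?Q X1 X2" thus "dv 1 X1 \<and> dv 1 X2" using dv_p by blast
next
  fix X1 X2 Y1 Y2 assume "?Q X1 X2" "?Q Y1 Y2"
  then obtain V1 V2 W1 W2 where v: "G V1" "G V2" "X1 = of_nat p * V1" "X2 = of_nat p * V2"
    "V1 * P11 + V2 * P12 = 0" "V1 * P21 + V2 * P22 = 0"
    and w: "G W1" "G W2" "Y1 = of_nat p * W1" "Y2 = of_nat p * W2"
    "W1 * P11 + W2 * P12 = 0" "W1 * P21 + W2 * P22 = 0" by blast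
  have "G (V1 + W1)" using v w by (intro G_intros2)
  moreover have "G (V2 + W2)" using v w by (intro G_intros2)
  moreover have "X1 + Y1 = of_nat p * (V1 + W1)" "X2 + Y2 = of_nat p * (V2 + W2)"
    by (simp_all add: v w algebra_simps)
  moreover have "(V1 + W1) * P11 + (V2 + W2) * P12 = (V1 * P11 + V2 * P12) + (W1 * P11 + W2 * P12)"
    "(V1 + W1) * P21 + (V2 + W2) * P22 = (V1 * P21 + V2 * P22) + (W1 * P21 + W2 * P22)"
    by (simp_all add: algebra_simps)
  ultimately show "?Q (X1 + Y1) (X2 + Y2)" using v(5,6) w(5,6) by auto
next
  fix R X1 X2 assume "G R" "?Q X1 X2"
  then obtain V1 V2 where v: "G V1" "G V2" "X1 = of_nat p * V1" "X2 = of_nat p * V2"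
    "V1 * P11 + V2 * P12 = 0" "V1 * P21 + V2 * P22 = 0" by blast
  have "G (R * V1)" using v \<open>G R\<close> by (intro G_intros2)
  moreover have "G (R * V2)" using v \<open>G R\<close> by (intro G_intros2)
  moreover have "R * X1 = of_nat p * (R * V1)" "R * X2 = of_nat p * (R * V2)"
    by (simp_all add: v algebra_simps)
  moreover have "(R * V1) * P11 + (R * V2) * P12 = R * (V1 * P11 + V2 * P12)"
    "(R * V1) * P21 + (R * V2) * P22 = R * (V1 * P21 + V2 * P22)"
    by (simp_all add: algebra_simps)
  ultimately show "?Q (R * X1) (R * X2)" using v(5,6) by auto
next
  fix X1 X2 assume "?Q X1 X2"
  then obtain V1 V2 where v: "G V1" "G V2" "X1 = of_nat p * V1" "X2 = of_nat p * V2"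
    "V1 * P11 + V2 * P12 = 0" "V1 * P21 + V2 * P22 = 0" by blast
  define W1 where "W1 = A * V1 + V2"
  define W2 where "W2 = C * V1"
  have gw1: "G W1" unfolding W1_def using v g by (intro G_intros2)
  have gw2: "G W2" unfolding W2_def using v g by (intro G_intros2)
  note gw = gw1 gw2
  have "of_nat p * (W1 * P11 + W2 * P12) = 0"
    using H1a[OF v(1,2)] unfolding W1_def W2_def v(5,6) by simp
  hence z1: "W1 * P11 + W2 * P12 = 0"
    using p_nonzero_mult[of "W1 * P11 + W2 * P12"] gw g by (blast intro: G_intros)
  have "of_nat p * (W1 * P21 + W2 * P22) = 0"
    using H1b[OF v(1,2)] unfolding W1_def W2_def v(5,6) by simp
  hence z2: "W1 * P21 + W2 * P22 = 0"
    using p_nonzero_mult[of "W1 * P21 + W2 * P22"] gw g by (blast intro: G_intros)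
  have "A * X1 + X2 = of_nat p * W1" "C * X1 = of_nat p * W2"
    unfolding W1_def W2_def by (simp_all add: v algebra_simps)
  thus "?Q (A * X1 + X2) (C * X1)" using gw z1 z2 by blast
next
  show "\<exists>X1 X2. G X1 \<and> G X2 \<and> ?Q X1 X2 \<and> (X1 \<noteq> 0 \<or> X2 \<noteq> 0)"
  proof -
    have main: "\<exists>V1 V2. G V1 \<and> G V2 \<and> V1 * P11 + V2 * P12 = 0 \<and> V1 * P21 + V2 * P22 = 0 \<and> (V1 \<noteq> 0 \<or> V2 \<noteq> 0)"
    proof (cases "P11 \<noteq> 0 \<or> P12 \<noteq> 0")
      case True
      have "P12 * P11 + (- P11) * P12 = 0" by (simp add: algebra_simps)
      moreover have "P12 * P21 + (- P11) * P22 = - (P11 * P22 - P12 * P21)" by (simp add: algebra_simps)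
      ultimately show ?thesis using True det g by (intro exI[of _ P12] exI[of _ "- P11"]) (auto intro: G_intros)
    next
      case False
      hence z: "P11 = 0" "P12 = 0" by auto
      show ?thesis
      proof (cases "P21 \<noteq> 0 \<or> P22 \<noteq> 0")
        case True
        have "P22 * P21 + (- P21) * P22 = 0" by (simp add: algebra_simps)
        thus ?thesis using True z g by (intro exI[of _ P22] exI[of _ "- P21"]) (auto intro: G_intros)
      next
        case False
        hence "P21 = 0" "P22 = 0" by auto
        moreover have "ep p \<noteq> 0" using of_int_ep_nonzero[of 1] by simp
        ultimately show ?thesis using z G_ep G_zero by (intro exI[of _ "ep p"] exI[of _ 0]) auto
      qed
    qed
    then obtain V1 V2 where v: "G V1" "G V2" "V1 * P11 + V2 * P12 = 0" "V1 * P21 + V2 * P22 = 0" "V1 \<noteq> 0 \<or> V2 \<noteq> 0"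
      by blast
    have "of_nat p * V1 \<noteq> 0 \<or> of_nat p * V2 \<noteq> 0" using v p_nonzero_mult by blast
    moreover have "G (of_nat p * V1)" using v by (intro G_intros2)
    moreover have "G (of_nat p * V2)" using v by (intro G_intros2)
    ultimately show ?thesis using v by blast
  qed
next
  fix V1 V2 assume v: "G V1" "G V2" "?Q (of_nat p * V1) (of_nat p * V2)"
  then obtain W1 W2 where w: "G W1" "G W2" "of_nat p * V1 = of_nat p * W1" "of_nat p * V2 = of_nat p * W2"
    "W1 * P11 + W2 * P12 = 0" "W1 * P21 + W2 * P22 = 0" by blast
  have "V1 = W1" "V2 = W2" using G_cancel_p v w by blast+
  hence "V1 * P11 + V2 * P12 = 0" "V1 * P21 + V2 * P22 = 0" using w by simp_all
  thus "?Q (V1 * P11 + V2 * P12) (V1 * P21 + V2 * P22)" using G_zero by (intro exI[of _ 0]) simp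
qed

end


context padic
begin

lemmas G_intros3 = G_of_nat_mult G_of_int_mult G_numeral_mult G_add G_sub G_mul G_neg G_zero G_emb G_ep

lemma ep_G': "G X \<Longrightarrow> X * ep p = X" using ep_G by (simp add: mult.commute)
lemma pep_G: "G X \<Longrightarrow> of_nat p * ep p * X = of_nat p * X" using ep_G by (simp add: mult.assoc)
lemma npep_G: "G X \<Longrightarrow> - (of_nat p * ep p) * X = of_nat p * (- X)" using pep_G by simp

lemma two_ep_nonzero: "2 * ep p \<noteq> 0"
  using of_int_ep_nonzero[of 2] by simp

lemma G_cancel_two: "G X \<Longrightarrow> 2 * X = 0 \<Longrightarrow> X = 0"
proof -
  assume a: "G X" "2 * X = 0"
  have "(2 * ep p) * X = 0" using a ep_G[OF a(1)] by (metis mult.assoc)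
  moreover have "G (2 * ep p)" by (intro G_intros2)
  ultimately show ?thesis using G_domain[OF _ a(1)] two_ep_nonzero by blast
qed

lemma core_l:
  assumes g: "G A" "G C" "G l" "G P11" "G P12" "G P21" "G P22"
    and Cnz: "C \<noteq> 0"
    and H1a: "\<And>V1 V2. G V1 \<Longrightarrow> G V2 \<Longrightarrow>
       of_nat p * ((A * V1 + V2) * P11 + (C * V1) * P12) = l * (A * (V1 * P11 + V2 * P12) + (V1 * P21 + V2 * P22))"
    and H1b: "\<And>V1 V2. G V1 \<Longrightarrow> G V2 \<Longrightarrow>
       of_nat p * ((A * V1 + V2) * P21 + (C * V1) * P22) = l * (C * (V1 * P11 + V2 * P12))"
    and det: "P11 * P22 - P12 * P21 \<noteq> 0"
  shows "(P11 = A * P12 + P22 \<and> P21 = C * P12) \<or>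
         (A = 0 \<and> P11 = - P22 \<and> P21 = - (C * P12))"
proof -
  note epG = ep_G[OF g(1)] ep_G[OF g(2)] ep_G[OF g(3)] ep_G[OF g(4)] ep_G[OF g(5)] ep_G[OF g(6)] ep_G[OF g(7)]
    ep_G'[OF g(1)] ep_G'[OF g(2)] ep_G'[OF g(3)] ep_G'[OF g(4)] ep_G'[OF g(5)] ep_G'[OF g(6)] ep_G'[OF g(7)]
  note zs = mult_zero_left mult_zero_right add_0_left add_0_right
  have e1: "of_nat p * P11 = l * (A * P12 + P22)"
    using H1a[OF G_zero G_ep] by (simp only: zs epG)
  have e2: "of_nat p * P21 = l * (C * P12)"
    using H1b[OF G_zero G_ep] by (simp only: zs epG)
  have e3: "of_nat p * (A * P11 + C * P12) = l * (A * P11 + P21)"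
    using H1a[OF G_ep G_zero] by (simp only: zs epG)
  have e4: "of_nat p * (A * P21 + C * P22) = l * (C * P11)"
    using H1b[OF G_ep G_zero] by (simp only: zs epG)
  define D where "D = P11 * P22 - P12 * P21"
  have gD: "G D" unfolding D_def using g by (intro G_intros2)
  have "- (of_nat p * of_nat p) * C * D = (of_nat p * (A * P11 + C * P12)) * (of_nat p * P21)
      - (of_nat p * P11) * (of_nat p * (A * P21 + C * P22))"
    unfolding D_def by (simp add: algebra_simps)
  also have "\<dots> = (l * (A * P11 + P21)) * (l * (C * P12)) - (l * (A * P12 + P22)) * (l * (C * P11))"
    unfolding e1 e2 e3 e4 ..
  also have "\<dots> = - (l * l) * C * D" unfolding D_def by (simp add: algebra_simps)
  finally have "(of_nat p * of_nat p - l * l) * (C * D) = 0" by (simp add: algebra_simps)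
  moreover have "(of_nat p * ep p * (of_nat p * ep p) - l * l) * (C * D) = (of_nat p * of_nat p - l * l) * (C * D)"
    using ep_G[OF G_mul[OF g(2) gD]] by (simp add: algebra_simps)
  ultimately have z: "(of_nat p * ep p * (of_nat p * ep p) - l * l) * (C * D) = 0" by simp
  have "C * D \<noteq> 0" using G_domain[OF g(2) gD] Cnz det unfolding D_def by blast
  moreover have "G (of_nat p * ep p * (of_nat p * ep p) - l * l)" using g by (simp add: G_intros3)
  ultimately have "of_nat p * ep p * (of_nat p * ep p) - l * l = 0"
    using G_domain[OF _ G_mul[OF g(2) gD] z] by blast
  hence "(of_nat p * ep p - l) * (of_nat p * ep p + l) = 0" by (simp add: algebra_simps)
  moreover have "G (of_nat p * ep p - l)" "G (of_nat p * ep p + l)" using g by (simp_all add: G_intros3)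
  ultimately have "of_nat p * ep p - l = 0 \<or> of_nat p * ep p + l = 0"
    using G_domain by blast
  hence lcase: "l = of_nat p * ep p \<or> l = - (of_nat p * ep p)"
    by (metis add.commute add_eq_0_iff eq_iff_diff_eq_0)
  show ?thesis
  proof (cases "l = of_nat p * ep p")
    case True
    have gx: "G (A * P12 + P22)" using g by (simp add: G_intros3)
    have "of_nat p * P11 = of_nat p * (A * P12 + P22)" using e1 unfolding True pep_G[OF gx] .
    hence "P11 = A * P12 + P22" using G_cancel_p g gx by blast
    moreover have gz: "G (C * P12)" using g by (simp add: G_intros3)
    have "of_nat p * P21 = of_nat p * (C * P12)" using e2 unfolding True pep_G[OF gz] .
    hence "P21 = C * P12" using G_cancel_p g gz by blast
    ultimately show ?thesis by blast
  next
    case False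
    hence lm: "l = - (of_nat p * ep p)" using lcase by blast
    have gx: "G (A * P12 + P22)" using g by (simp add: G_intros3)
    have "of_nat p * P11 = of_nat p * (- (A * P12 + P22))" using e1 unfolding lm npep_G[OF gx] .
    hence x: "P11 = - (A * P12 + P22)" using G_cancel_p g gx G_neg by blast
    have gz: "G (C * P12)" using g by (simp add: G_intros3)
    have "of_nat p * P21 = of_nat p * (- (C * P12))" using e2 unfolding lm npep_G[OF gz] .
    hence z: "P21 = - (C * P12)" using G_cancel_p g gz G_neg by blast
    have gy: "G (A * P11 + P21)" "G (A * P11 + C * P12)" using g by (simp_all add: G_intros3)
    have "of_nat p * (A * P11 + C * P12) = of_nat p * (- (A * P11 + P21))" using e3 unfolding lm npep_G[OF gy(1)] .
    hence "A * P11 + C * P12 = - (A * P11 + P21)" using G_cancel_p gy G_neg by blast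
    hence "2 * (A * P11) = 0" unfolding z by (simp add: algebra_simps)
    moreover have "G (A * P11)" using g by (simp add: G_intros3)
    ultimately have ax: "A * P11 = 0" using G_cancel_two by blast
    have gw: "G (C * P11)" "G (A * P21 + C * P22)" using g by (simp_all add: G_intros3)
    have "of_nat p * (A * P21 + C * P22) = of_nat p * (- (C * P11))" using e4 unfolding lm npep_G[OF gw(1)] .
    hence "A * P21 + C * P22 = - (C * P11)" using G_cancel_p gw G_neg by blast
    hence "2 * (C * (A * P12)) = 0" unfolding z x by (simp add: algebra_simps)
    moreover have "G (C * (A * P12))" "G (A * P12)" using g by (simp_all add: G_intros3)
    ultimately have "C * (A * P12) = 0" using G_cancel_two by blast
    hence ay: "A * P12 = 0" using G_domain[OF g(2) \<open>G (A * P12)\<close>] Cnz by blast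
    have "A = 0"
    proof (rule ccontr)
      assume "A \<noteq> 0"
      hence "P11 = 0" "P12 = 0" using ax ay G_domain g by blast+
      hence "P21 = 0" "P22 = 0" using x z by simp_all
      thus False using det \<open>P11 = 0\<close> by simp
    qed
    thus ?thesis using x z by simp
  qed
qed

lemma hensel_T:
  assumes g: "G A" "G C"
    and r0: "int p dvd r0 * r0 - rep A p 1 * r0 - rep C p 1" and d0: "\<not> int p dvd 2 * r0 - rep A p 1"
  shows "\<exists>Mu. G Mu \<and> Mu * Mu = A * Mu + C"
proof -
  have a: "rep A p \<in> zp p" and c: "rep C p \<in> zp p" using G_zp g by auto
  obtain mu where mu: "mu \<in> zp p" "\<And>n. (mu n * mu n - rep A p n * mu n - rep C p n) mod int p ^ n = 0"
    using hensel[OF a c, of r0] r0 d0 by (auto simp: power2_eq_square)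
  have eq: "zp_mul p mu mu = zp_add p (zp_mul p (rep A p) mu) (rep C p)"
  proof (rule ext)
    fix n
    have "int p ^ n dvd mu n * mu n - (rep A p n * mu n + rep C p n)"
      using mu(2)[of n] by (simp add: dvd_eq_mod_eq_0 algebra_simps)
    hence "[mu n * mu n = rep A p n * mu n + rep C p n] (mod int p ^ n)"
      by (simp add: cong_iff_dvd_diff)
    hence "(mu n * mu n) mod int p ^ n = (rep A p n * mu n + rep C p n) mod int p ^ n"
      unfolding cong_def .
    thus "zp_mul p mu mu n = zp_add p (zp_mul p (rep A p) mu) (rep C p) n"
      unfolding zp_mul_def zp_add_def by (simp add: mod_simps)
  qed
  have "emb p mu * emb p mu = emb p (rep A p) * emb p mu + emb p (rep C p)"
    using arg_cong[OF eq, of "emb p"] by (simp add: emb_mul emb_add)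
  hence "emb p mu * emb p mu = A * emb p mu + C" using emb_rep g by simp
  thus ?thesis using G_emb[OF mu(1)] by blast
qed

lemma no_root_int:
  fixes W Y A1 C1 :: int
  assumes D: "int p dvd W * W + A1 * W * Y - C1 * Y * Y"
    and nr: "\<forall>r. \<not> int p dvd r * r - A1 * r - C1"
  shows "int p dvd W \<and> int p dvd Y"
proof (cases "int p dvd Y")
  case True
  hence "int p dvd A1 * W * Y - C1 * Y * Y" by simp
  hence "int p dvd (W * W + A1 * W * Y - C1 * Y * Y) - (A1 * W * Y - C1 * Y * Y)" using D by (rule dvd_diff[rotated])
  hence "int p dvd W * W" by simp
  hence "int p dvd W" using pint_prime prime_dvd_mult_iff by blast
  thus ?thesis using True by blast
next
  case False
  hence "coprime Y (int p)" using coprime_p_of_cong[of Y Y] by auto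
  then obtain Yi where Yi: "[Y * Yi = 1] (mod int p)" using cong_solve_coprime_int by blast
  define u where "u = Y * Yi - 1"
  have du: "int p dvd u" using Yi unfolding u_def by (simp add: cong_iff_dvd_diff)
  define r where "r = - W * Yi"
  have "r * r - A1 * r - C1 = Yi * Yi * (W * W + A1 * W * Y - C1 * Y * Y) - A1 * W * Yi * u + C1 * u * (Y * Yi + 1)"
    unfolding r_def u_def by (simp add: algebra_simps)
  moreover have "int p dvd Yi * Yi * (W * W + A1 * W * Y - C1 * Y * Y) - A1 * W * Yi * u + C1 * u * (Y * Yi + 1)"
  proof (rule dvd_add[OF dvd_diff])
    show "int p dvd Yi * Yi * (W * W + A1 * W * Y - C1 * Y * Y)" using D by (rule dvd_mult)
    show "int p dvd A1 * W * Yi * u" using du by (rule dvd_mult)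
    have "int p dvd C1 * u" using du by (rule dvd_mult)
    thus "int p dvd C1 * u * (Y * Yi + 1)" by (rule dvd_mult2)
  qed
  ultimately have "int p dvd r * r - A1 * r - C1" by simp
  thus ?thesis using nr by blast
qed

lemma dv1_int_det:
  assumes "G w" "G y" "G A" "G C"
  shows "dv 1 (w * w + A * w * y - C * y * y) \<longleftrightarrow>
    int p dvd rep w p 1 * rep w p 1 + rep A p 1 * rep w p 1 * rep y p 1 - rep C p 1 * rep y p 1 * rep y p 1"
proof -
  have "G (w * w + A * w * y - C * y * y)" using assms by (simp add: G_intros3)
  hence "dv 1 (w * w + A * w * y - C * y * y) \<longleftrightarrow> rep (w * w + A * w * y - C * y * y) p 1 mod int p = 0"
    using dv1_iff rep_mod[of _ p 1] by (simp add: dvd_eq_mod_eq_0)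
  also have "rep (w * w + A * w * y - C * y * y) p 1 mod int p =
    (rep w p 1 * rep w p 1 + rep A p 1 * rep w p 1 * rep y p 1 - rep C p 1 * rep y p 1 * rep y p 1) mod int p"
    by (simp add: rep_simps mod_simps)
  finally show ?thesis by (simp add: dvd_eq_mod_eq_0)
qed

lemma rep_numeral: "rep (numeral k :: zt) = (\<lambda>q n. numeral k mod int q ^ n)"
  using rep_of_int[of "numeral k"] by simp

lemma root_case:
  assumes g: "G A" "G C" "G w" "G y"
    and dd: "dv 1 (w * w + A * w * y - C * y * y)"
    and r0: "int p dvd r0 * r0 - rep A p 1 * r0 - rep C p 1" and d0: "\<not> int p dvd 2 * r0 - rep A p 1"
  shows "\<exists>Q. engineQ A C (A * y + w) y (C * y) w Q"
proof -
  obtain Mu where mu: "G Mu" "Mu * Mu = A * Mu + C" using hensel_T[OF g(1,2) r0 d0] by blast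
  have root2: "(A - Mu) * (A - Mu) = A * (A - Mu) + C"
  proof -
    have "(A - Mu) * (A - Mu) - (A * (A - Mu) + C) = Mu * Mu - (A * Mu + C)" by (simp add: algebra_simps)
    thus ?thesis using mu(2) by simp
  qed
  have fact: "(w + y * Mu) * (w + y * (A - Mu)) = w * w + A * w * y - C * y * y"
  proof -
    have "(w + y * Mu) * (w + y * (A - Mu)) = w * w + A * w * y - y * y * (Mu * Mu - A * Mu)"
      by (simp add: algebra_simps)
    also have "Mu * Mu - A * Mu = C" using mu(2) by simp
    finally show ?thesis by (simp add: algebra_simps)
  qed
  have gg: "G (w + y * Mu)" "G (w + y * (A - Mu))" "G (A - Mu)" using g mu by (simp_all add: G_intros3)
  have "dv 1 (w + y * Mu) \<or> dv 1 (w + y * (A - Mu))" using dv1_prime[OF gg(1,2)] dd fact by simp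
  thus ?thesis
  proof
    assume "dv 1 (w + y * Mu)"
    then obtain k where k: "G k" "w + y * Mu = of_nat p ^ 1 * k" using dv_div gg(1) by blast
    have wk: "w + y * Mu = of_nat p * k" using k(2) by simp
    have "engineQ A C (A * y + w) y (C * y) w
     (\<lambda>X1 X2. \<exists>R. G R \<and> X1 = of_nat p * R \<and> X2 = of_nat p * (R * (Mu - A)))"
      by (rule K3[OF g(1,2) mu(1) g(3,4) k(1) mu(2) refl refl refl refl wk])
    thus ?thesis by blast
  next
    assume "dv 1 (w + y * (A - Mu))"
    then obtain k where k: "G k" "w + y * (A - Mu) = of_nat p ^ 1 * k" using dv_div gg(2) by blast
    have wk: "w + y * (A - Mu) = of_nat p * k" using k(2) by simp
    have "engineQ A C (A * y + w) y (C * y) w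
     (\<lambda>X1 X2. \<exists>R. G R \<and> X1 = of_nat p * R \<and> X2 = of_nat p * (R * ((A - Mu) - A)))"
      by (rule K3[OF g(1,2) gg(3) g(3,4) k(1) root2 refl refl refl refl wk])
    thus ?thesis by blast
  qed
qed

lemma noroot_wy:
  assumes g: "G A" "G C" "G w" "G y"
    and dd: "dv 1 (w * w + A * w * y - C * y * y)"
    and nr: "\<forall>r. \<not> int p dvd r * r - rep A p 1 * r - rep C p 1"
  shows "dv 1 w \<and> dv 1 y"
  using no_root_int[OF dd[unfolded dv1_int_det[OF g(3,4,1,2)]] nr] dv1_iff g by blast

lemma noroot_case:
  assumes g: "G A" "G C" "G w" "G y"
    and dd: "dv 1 (w * w + A * w * y - C * y * y)"
    and nr: "\<forall>r. \<not> int p dvd r * r - rep A p 1 * r - rep C p 1"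
  shows "\<exists>Q. engineQ A C (A * y + w) y (C * y) w Q"
proof -
  have d: "dv 1 w" "dv 1 y" using noroot_wy[OF assms] by auto
  have "dv 1 (A * y + w)" using d by (blast intro: dv_add dv_multL)
  moreover have "dv 1 (C * y)" using d by (blast intro: dv_multL)
  ultimately show ?thesis using K2[of "A * y + w" y "C * y" w A C] d by blast
qed

lemma nonsq_noroot:
  assumes gC: "G C" and ns: "\<not> (\<exists>x::int. x ^ 2 mod int p = rep C p 1)"
  shows "\<forall>r. \<not> int p dvd r * r - rep (0::zt) p 1 * r - rep C p 1"
proof (intro allI notI)
  fix r assume "int p dvd r * r - rep (0::zt) p 1 * r - rep C p 1"
  hence "int p dvd r * r - rep C p 1" by (simp add: rep_simps)
  hence "(r * r) mod int p = rep C p 1 mod int p" by (simp add: mod_eq_dvd_iff)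
  also have "\<dots> = rep C p 1" using rep_mod[of C p 1] by simp
  finally show False using ns by (metis power2_eq_square)
qed

lemma A_nonzero_of: "\<not> dv 1 A \<Longrightarrow> A \<noteq> 0" using dv_zero by blast

lemma core_final:
  assumes g: "G A" "G C" "G l" "G P11" "G P12" "G P21" "G P22"
    and Cnz: "C \<noteq> 0"
    and H1a: "\<And>V1 V2. G V1 \<Longrightarrow> G V2 \<Longrightarrow>
       of_nat p * ((A * V1 + V2) * P11 + (C * V1) * P12) = l * (A * (V1 * P11 + V2 * P12) + (V1 * P21 + V2 * P22))"
    and H1b: "\<And>V1 V2. G V1 \<Longrightarrow> G V2 \<Longrightarrow>
       of_nat p * ((A * V1 + V2) * P21 + (C * V1) * P22) = l * (C * (V1 * P11 + V2 * P12))"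
    and H2: "\<exists>D1 D2. G D1 \<and> G D2 \<and> \<not> (dv 1 D1 \<and> dv 1 D2) \<and> dv 1 (D1 * P11 + D2 * P12)
       \<and> dv 1 (D1 * P21 + D2 * P22)"
    and cases: "(dv 1 A \<and> dv 2 C) \<or> (\<not> dv 1 A \<and> dv 1 C) \<or> (p \<ge> 3 \<and> A \<noteq> 0 \<and> dv 1 A \<and> \<not> dv 1 C)
       \<or> (A = 0 \<and> \<not> dv 1 C \<and> \<not> (\<exists>x::int. x ^ 2 mod int p = rep C p 1))
       \<or> (\<not> dv 1 A \<and> \<not> dv 1 C \<and> (\<not> dv 1 (4 * C + A * A) \<or> dv 2 (4 * C + A * A)))"
  shows "\<exists>Q. engineQ A C P11 P12 P21 P22 Q"
proof (cases "P11 * P22 - P12 * P21 = 0")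
  case True
  thus ?thesis using K1[OF g H1a H1b True] by blast
next
  case False
  define y where "y = P12"
  define w where "w = P22"
  have gw: "G w" "G y" unfolding w_def y_def using g by auto
  have gdet: "G (P11 * P22 - P12 * P21)" using g by (simp add: G_intros3)
  have dvdet: "dv 1 (P11 * P22 - P12 * P21)"
  proof -
    obtain D1 D2 where d: "G D1" "G D2" "\<not> (dv 1 D1 \<and> dv 1 D2)" "dv 1 (D1 * P11 + D2 * P12)"
      "dv 1 (D1 * P21 + D2 * P22)" using H2 by blast
    have "(P11 * P22 - P12 * P21) * D1 = P22 * (D1 * P11 + D2 * P12) - P12 * (D1 * P21 + D2 * P22)"
      by (simp add: algebra_simps)
    moreover have "dv 1 (P22 * (D1 * P11 + D2 * P12) - P12 * (D1 * P21 + D2 * P22))"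
      using d by (blast intro: dv_sub dv_multL)
    ultimately have 1: "dv 1 ((P11 * P22 - P12 * P21) * D1)" by simp
    have "(P11 * P22 - P12 * P21) * D2 = P11 * (D1 * P21 + D2 * P22) - P21 * (D1 * P11 + D2 * P12)"
      by (simp add: algebra_simps)
    moreover have "dv 1 (P11 * (D1 * P21 + D2 * P22) - P21 * (D1 * P11 + D2 * P12))"
      using d by (blast intro: dv_sub dv_multL)
    ultimately have 2: "dv 1 ((P11 * P22 - P12 * P21) * D2)" by simp
    show ?thesis using dv1_prime[OF gdet d(1) 1] dv1_prime[OF gdet d(2) 2] d(3) by blast
  qed
  have A1bd: "0 \<le> rep A p 1" "rep A p 1 < int p" using rho_bounds g(1) by auto
  have C1bd: "0 \<le> rep C p 1" "rep C p 1 < int p" using rho_bounds g(2) by auto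
  have dA: "dv 1 A \<longleftrightarrow> int p dvd rep A p 1" using dv1_iff g(1) by blast
  have dC: "dv 1 C \<longleftrightarrow> int p dvd rep C p 1" using dv1_iff g(2) by blast
  from core_l[OF g Cnz H1a H1b False]
  show ?thesis
  proof
    assume "P11 = A * P12 + P22 \<and> P21 = C * P12"
    hence P: "P11 = A * y + w" "P21 = C * y" unfolding y_def w_def by auto
    have dd: "dv 1 (w * w + A * w * y - C * y * y)"
    proof -
      have "P11 * P22 - P12 * P21 = w * w + A * w * y - C * y * y"
        unfolding P y_def[symmetric] w_def[symmetric] by (simp add: algebra_simps)
      thus ?thesis using dvdet by simp
    qed
    have "\<exists>Q. engineQ A C (A * y + w) y (C * y) w Q"
    proof -
      consider (c1) "dv 1 A \<and> dv 2 C" | (c2) "\<not> dv 1 A \<and> dv 1 C" | (c3) "p \<ge> 3 \<and> A \<noteq> 0 \<and> dv 1 A \<and> \<not> dv 1 C"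
        | (c4) "A = 0 \<and> \<not> dv 1 C \<and> \<not> (\<exists>x::int. x ^ 2 mod int p = rep C p 1)"
        | (c5) "\<not> dv 1 A \<and> \<not> dv 1 C \<and> (\<not> dv 1 (4 * C + A * A) \<or> dv 2 (4 * C + A * A))"
        using cases by blast
      thus ?thesis
      proof cases
        case c1
        have dC1: "dv 1 C" using c1 dv_21 g(2) by blast
        have "dv 1 (A * w * y)" using c1 by (blast intro: dv_multR)
        moreover have "dv 1 (C * y * y)" using dC1 by (blast intro: dv_multR)
        ultimately have "dv 1 ((w * w + A * w * y - C * y * y) - A * w * y + C * y * y)"
          using dd by (blast intro: dv_add dv_sub)
        hence "dv 1 (w * w)" by simp
        hence dw: "dv 1 w" using dv1_prime gw by blast
        have d1: "dv 1 (A * y + w)" using c1 dw by (blast intro: dv_add dv_multR)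
        have d2: "dv 2 (C * y)" using c1 by (blast intro: dv_multR)
        have gP: "G (A * y + w)" "G (C * y)" using g gw by (simp_all add: G_intros3)
        have "engineQ A C (A * y + w) y (C * y) w (\<lambda>X1 X2. dv 1 X1 \<and> dv 2 X2)"
          using K4[OF g(2) gP(1) gw(2) gP(2) gw(1) dC1 d1 d2 dw] .
        thus ?thesis by blast
      next
        case c2
        show ?thesis
        proof (rule root_case[OF g(1,2) gw dd, of 0])
          show "int p dvd 0 * 0 - rep A p 1 * 0 - rep C p 1" using c2 dC by simp
          show "\<not> int p dvd 2 * 0 - rep A p 1" using c2 dA by simp
        qed
      next
        case c3
        show ?thesis
        proof (cases "\<exists>r0. int p dvd r0 * r0 - rep A p 1 * r0 - rep C p 1")
          case True
          then obtain r0 where r0: "int p dvd r0 * r0 - rep A p 1 * r0 - rep C p 1" by blast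
          have "\<not> int p dvd 2 * r0 - rep A p 1"
          proof
            assume h: "int p dvd 2 * r0 - rep A p 1"
            have pA: "int p dvd rep A p 1" using c3 dA by blast
            have "int p dvd (2 * r0 - rep A p 1) + rep A p 1" using h pA by (rule dvd_add)
            hence "int p dvd 2 * r0" by simp
            hence "int p dvd 2 \<or> int p dvd r0" using pint_prime prime_dvd_mult_iff by blast
            moreover have "\<not> int p dvd 2" using c3 by (auto dest: zdvd_imp_le)
            ultimately have pr: "int p dvd r0" by blast
            have "int p dvd r0 * (r0 - rep A p 1)" using pr by (rule dvd_mult2)
            hence "int p dvd r0 * (r0 - rep A p 1) - (r0 * r0 - rep A p 1 * r0 - rep C p 1)"
              using r0 by (rule dvd_diff)
            moreover have "r0 * (r0 - rep A p 1) - (r0 * r0 - rep A p 1 * r0 - rep C p 1) = rep C p 1"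
              by (simp add: algebra_simps)
            ultimately have "int p dvd rep C p 1" by metis
            thus False using c3 dC by blast
          qed
          thus ?thesis using root_case[OF g(1,2) gw dd r0] by blast
        next
          case False
          thus ?thesis using noroot_case[OF g(1,2) gw dd] by blast
        qed
      next
        case c4
        hence "\<forall>r. \<not> int p dvd r * r - rep A p 1 * r - rep C p 1" using nonsq_noroot[OF g(2)] by auto
        thus ?thesis using noroot_case[OF g(1,2) gw dd] by blast
      next
        case c5
        define Dl where "Dl = 4 * C + A * A"
        have gDl: "G Dl" unfolding Dl_def using g by (simp add: G_intros3)
        have repD: "rep Dl p 1 mod int p = (4 * rep C p 1 + rep A p 1 * rep A p 1) mod int p"
          unfolding Dl_def by (simp add: rep_simps rep_numeral mod_simps)
        have dDl: "dv 1 Dl \<longleftrightarrow> int p dvd 4 * rep C p 1 + rep A p 1 * rep A p 1"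
          using dv1_iff[OF gDl] repD by (simp add: dvd_eq_mod_eq_0)
        show ?thesis
        proof (cases "dv 1 Dl")
          case False
          show ?thesis
          proof (cases "\<exists>r0. int p dvd r0 * r0 - rep A p 1 * r0 - rep C p 1")
            case True
            then obtain r0 where r0: "int p dvd r0 * r0 - rep A p 1 * r0 - rep C p 1" by blast
            have "\<not> int p dvd 2 * r0 - rep A p 1"
            proof
              assume h: "int p dvd 2 * r0 - rep A p 1"
              have "(2 * r0 - rep A p 1) * (2 * r0 - rep A p 1) =
                  4 * (r0 * r0 - rep A p 1 * r0 - rep C p 1) + (4 * rep C p 1 + rep A p 1 * rep A p 1)"
                by (simp add: algebra_simps)
              moreover have "int p dvd (2 * r0 - rep A p 1) * (2 * r0 - rep A p 1)" using h by simp
              ultimately have "int p dvd 4 * (r0 * r0 - rep A p 1 * r0 - rep C p 1) + (4 * rep C p 1 + rep A p 1 * rep A p 1)"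
                by simp
              moreover have "int p dvd 4 * (r0 * r0 - rep A p 1 * r0 - rep C p 1)" using r0 by (rule dvd_mult)
              ultimately have "int p dvd 4 * rep C p 1 + rep A p 1 * rep A p 1"
                using dvd_add_right_iff by blast
              thus False using False dDl by blast
            qed
            thus ?thesis using root_case[OF g(1,2) gw dd r0] by blast
          next
            case False
            thus ?thesis using noroot_case[OF g(1,2) gw dd] by blast
          qed
        next
          case True
          hence d2: "dv 2 Dl" using c5 unfolding Dl_def by blast
          have p2: "p \<noteq> 2"
          proof
            assume "p = 2"
            hence "int p dvd 4 * rep C p 1" by simp
            hence "int p dvd rep A p 1 * rep A p 1" using True dDl dvd_add_right_iff by blast
            hence "int p dvd rep A p 1" using pint_prime prime_dvd_mult_iff by blast
            thus False using c5 dA by blast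
          qed
          have id: "4 * (w * w + A * w * y - C * y * y) = (2 * w + A * y) * (2 * w + A * y) - Dl * (y * y)"
            unfolding Dl_def by (simp add: algebra_simps)
          have "dv 1 (4 * (w * w + A * w * y - C * y * y) + Dl * (y * y))"
            using dd True by (blast intro: dv_add dv_multL dv_multR)
          hence "dv 1 ((2 * w + A * y) * (2 * w + A * y))" unfolding id by simp
          moreover have g2: "G (2 * w + A * y)" using g gw by (simp add: G_intros3)
          ultimately have dw: "dv 1 (2 * w + A * y)" using dv1_prime by blast
          have "engineQ A C (A * y + w) y (C * y) w (\<lambda>X1 X2. dv 1 X1 \<and> dv 2 (2 * X2 + A * X1))"
            using K5[OF p2 g(1,2) gw(1,2) d2[unfolded Dl_def] refl refl refl refl dw] .
          thus ?thesis by blast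
        qed
      qed
    qed
    thus ?thesis using P unfolding y_def w_def by simp
  next
    assume "A = 0 \<and> P11 = - P22 \<and> P21 = - (C * P12)"
    hence A0: "A = 0" and P: "P11 = - w" "P21 = - (C * y)" unfolding y_def w_def by auto
    have dd: "dv 1 (w * w + A * w * y - C * y * y)"
    proof -
      have "P11 * P22 - P12 * P21 = - (w * w + A * w * y - C * y * y)"
        unfolding P A0 y_def[symmetric] w_def[symmetric] by (simp add: algebra_simps)
      thus ?thesis using dvdet dv_neg by fastforce
    qed
    have "\<exists>Q. engineQ A C (- w) y (- (C * y)) w Q"
    proof -
      have "\<not> (\<not> dv 1 A)" using A0 dv_zero by simp
      hence cs: "(dv 1 A \<and> dv 2 C) \<or> (A = 0 \<and> \<not> dv 1 C \<and> \<not> (\<exists>x::int. x ^ 2 mod int p = rep C p 1))"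
        using cases A0 by blast
      thus ?thesis
      proof
        assume c1: "dv 1 A \<and> dv 2 C"
        have dC1: "dv 1 C" using c1 dv_21 g(2) by blast
        have "dv 1 (w * w + A * w * y - C * y * y)" using dd .
        hence "dv 1 (w * w)" unfolding A0 using dC1 by (simp, metis dv_add dv_multR diff_add_cancel)
        hence dw: "dv 1 w" using dv1_prime gw by blast
        have d2: "dv 2 (- (C * y))" using c1 by (blast intro: dv_multR dv_neg)
        have d1: "dv 1 (- w)" using dw by (rule dv_neg)
        have gP: "G (- w)" "G (- (C * y))" using g gw by (simp_all add: G_intros3)
        have "engineQ A C (- w) y (- (C * y)) w (\<lambda>X1 X2. dv 1 X1 \<and> dv 2 X2)"
          using K4[OF g(2) gP(1) gw(2) gP(2) gw(1) dC1 d1 d2 dw] .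
        thus ?thesis by blast
      next
        assume c4: "A = 0 \<and> \<not> dv 1 C \<and> \<not> (\<exists>x::int. x ^ 2 mod int p = rep C p 1)"
        hence "\<forall>r. \<not> int p dvd r * r - rep A p 1 * r - rep C p 1" using nonsq_noroot[OF g(2)] by auto
        hence d: "dv 1 w" "dv 1 y" using noroot_wy[OF g(1,2) gw dd] by auto
        have "dv 1 (- w)" "dv 1 (- (C * y))" using d by (blast intro: dv_neg dv_multL)+
        thus ?thesis using K2[of "- w" y "- (C * y)" w A C] d by blast
      qed
    qed
    thus ?thesis using P unfolding y_def w_def by simp
  qed
qed

end


locale setting = padic +
  fixes s :: nat and a c :: "nat \<Rightarrow> int"
    and M :: "((nat \<Rightarrow> int) \<times> (nat \<Rightarrow> int) \<times> (nat \<Rightarrow> int)) set"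
    and phi :: "(nat \<Rightarrow> int) \<times> (nat \<Rightarrow> int) \<times> (nat \<Rightarrow> int) \<Rightarrow> (nat \<Rightarrow> int) \<times> (nat \<Rightarrow> int) \<times> (nat \<Rightarrow> int)"
  assumes a_zp: "a \<in> zp p" and c_zp: "c \<in> zp p" and c_nz: "c \<noteq> zp_zero"
    and sve: "simple_virtual_endo p (L7 p s a c) M phi"
    and idx: "lie_index (L7 p s a c) M = p"
begin

abbreviation "LL \<equiv> L7 p s a c"

lemma carrier_L: "lcarrier LL = zp p \<times> zp p \<times> zp p" by (simp add: L7_def)
lemma zero_L: "lzero LL = (zp_zero, zp_zero, zp_zero)" by (simp add: L7_def)
lemma add_L: "ladd LL (u0, u1, u2) (v0, v1, v2) = (zp_add p u0 v0, zp_add p u1 v1, zp_add p u2 v2)"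
  by (simp add: L7_def)
lemma smul_L: "lsmul LL r (u0, u1, u2) = (zp_mul p r u0, zp_mul p r u1, zp_mul p r u2)"
  by (simp add: L7_def)
lemma br_L: "lbr LL (u0, u1, u2) (v0, v1, v2) =
  (zp_zero,
   zp_add p (zp_mul p (zp_mul p (zp_of_int p (int p ^ s)) a) (zp_sub p (zp_mul p u0 v1) (zp_mul p u1 v0)))
            (zp_mul p (zp_of_int p (int p ^ s)) (zp_sub p (zp_mul p u0 v2) (zp_mul p u2 v0))),
   zp_mul p (zp_mul p (zp_of_int p (int p ^ s)) c) (zp_sub p (zp_mul p u0 v1) (zp_mul p u1 v0)))"
  by (simp add: L7_def Let_def)

definition ec :: "nat \<Rightarrow> (nat \<Rightarrow> int) \<times> (nat \<Rightarrow> int) \<times> (nat \<Rightarrow> int) \<Rightarrow> zt" where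
  "ec t x = (if t = 0 then emb p (fst x) else if t = 1 then emb p (fst (snd x)) else emb p (snd (snd x)))"

abbreviation "AA \<equiv> emb p a"
abbreviation "CC \<equiv> emb p c"

lemma ec_add: "ec t (ladd LL x y) = ec t x + ec t y"
  by (cases x; cases y) (simp add: ec_def add_L emb_add)

lemma ec_smul: "ec t (lsmul LL r x) = emb p r * ec t x"
  by (cases x) (simp add: ec_def smul_L emb_mul)

lemma ec_ep: "ep p * ec t x = ec t x"
  by (simp add: ec_def ep_mult)

lemma G_ec: "x \<in> lcarrier LL \<Longrightarrow> G (ec t x)"
  by (cases x) (auto simp: ec_def carrier_L intro: G_emb)

lemma ec_zero: "ec t (lzero LL) = 0"
  by (simp add: ec_def zero_L emb_zero)

lemma eq_ec:
  assumes "x \<in> lcarrier LL" "y \<in> lcarrier LL" "ec 0 x = ec 0 y" "ec 1 x = ec 1 y" "ec 2 x = ec 2 y"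
  shows "x = y"
proof -
  obtain x0 x1 x2 where x: "x = (x0, x1, x2)" by (cases x) auto
  obtain y0 y1 y2 where y: "y = (y0, y1, y2)" by (cases y) auto
  have m: "x0 \<in> zp p" "x1 \<in> zp p" "x2 \<in> zp p" "y0 \<in> zp p" "y1 \<in> zp p" "y2 \<in> zp p"
    using assms(1,2) unfolding x y carrier_L by auto
  have "emb p x0 = emb p y0" "emb p x1 = emb p y1" "emb p x2 = emb p y2"
    using assms(3,4,5) unfolding x y by (simp_all add: ec_def)
  thus ?thesis using emb_inj m unfolding x y by blast
qed

lemma ve: "virtual_endo p LL M phi" using sve unfolding simple_virtual_endo_def by blast
lemma subalg: "lie_subalgebra p LL M" using ve unfolding virtual_endo_def by blast
lemma M_sub: "M \<subseteq> lcarrier LL" using subalg unfolding lie_subalgebra_def by blast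
lemma M_zero: "lzero LL \<in> M" using subalg unfolding lie_subalgebra_def by blast
lemma M_add: "x \<in> M \<Longrightarrow> y \<in> M \<Longrightarrow> ladd LL x y \<in> M" using subalg unfolding lie_subalgebra_def by blast
lemma M_br: "x \<in> M \<Longrightarrow> y \<in> M \<Longrightarrow> lbr LL x y \<in> M" using subalg unfolding lie_subalgebra_def by blast
lemma M_smul: "r \<in> zp p \<Longrightarrow> x \<in> M \<Longrightarrow> lsmul LL r x \<in> M" using subalg unfolding lie_subalgebra_def by blast
lemma fin_cos: "finite (lie_cosets LL M)" using ve unfolding virtual_endo_def by blast
lemma phi_car: "x \<in> M \<Longrightarrow> phi x \<in> lcarrier LL" using ve unfolding virtual_endo_def by blast
lemma phi_add: "x \<in> M \<Longrightarrow> y \<in> M \<Longrightarrow> phi (ladd LL x y) = ladd LL (phi x) (phi y)"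
  using ve unfolding virtual_endo_def by blast
lemma phi_smul: "r \<in> zp p \<Longrightarrow> x \<in> M \<Longrightarrow> phi (lsmul LL r x) = lsmul LL r (phi x)"
  using ve unfolding virtual_endo_def by blast
lemma phi_br: "x \<in> M \<Longrightarrow> y \<in> M \<Longrightarrow> phi (lbr LL x y) = lbr LL (phi x) (phi y)"
  using ve unfolding virtual_endo_def by blast
lemma simple: "invariant_ideal p LL M phi I \<Longrightarrow> I = {lzero LL}"
  using sve unfolding simple_virtual_endo_def by blast

lemma car_add: "x \<in> lcarrier LL \<Longrightarrow> y \<in> lcarrier LL \<Longrightarrow> ladd LL x y \<in> lcarrier LL"
  by (cases x; cases y) (auto simp: carrier_L add_L zp_add_mem[OF p_pos])
lemma car_smul: "r \<in> zp p \<Longrightarrow> x \<in> lcarrier LL \<Longrightarrow> lsmul LL r x \<in> lcarrier LL"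
  by (cases x) (auto simp: carrier_L smul_L zp_mul_mem[OF p_pos])
lemma car_br: "x \<in> lcarrier LL \<Longrightarrow> y \<in> lcarrier LL \<Longrightarrow> lbr LL x y \<in> lcarrier LL"
  by (cases x; cases y) (auto simp: carrier_L br_L a_zp c_zp zp_add_mem[OF p_pos] zp_mul_mem[OF p_pos]
      zp_sub_mem[OF p_pos] zp_of_int_mem[OF p_pos] zp_zero_mem[OF p_pos])

lemma add_zero_L: "x \<in> lcarrier LL \<Longrightarrow> ladd LL x (lzero LL) = x"
  using M_zero M_sub by (intro eq_ec) (auto intro: car_add simp: ec_add ec_zero)

lemma pigeon:
  assumes "finite S" "card S > p" "\<And>i. i \<in> S \<Longrightarrow> f i \<in> lcarrier LL"
  shows "\<exists>i\<in>S. \<exists>j\<in>S. i \<noteq> j \<and> (\<exists>m\<in>M. f i = ladd LL (f j) m)"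
proof -
  define cos where "cos y = {ladd LL y m | m. m \<in> M}" for y
  have sub: "(\<lambda>i. cos (f i)) ` S \<subseteq> lie_cosets LL M"
    unfolding lie_cosets_def cos_def using assms(3) by blast
  have "\<not> inj_on (\<lambda>i. cos (f i)) S"
  proof
    assume "inj_on (\<lambda>i. cos (f i)) S"
    hence "card S = card ((\<lambda>i. cos (f i)) ` S)" by (simp add: card_image)
    also have "\<dots> \<le> card (lie_cosets LL M)" using sub fin_cos by (rule card_mono[rotated])
    also have "\<dots> = p" using idx unfolding lie_index_def .
    finally show False using assms(2) by simp
  qed
  then obtain i j where ij: "i \<in> S" "j \<in> S" "i \<noteq> j" "cos (f i) = cos (f j)"
    unfolding inj_on_def by blast
  have "f i = ladd LL (f i) (lzero LL)" using add_zero_L[OF assms(3)[OF ij(1)]] by simp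
  hence "f i \<in> cos (f i)" unfolding cos_def using M_zero by blast
  hence "f i \<in> cos (f j)" using ij(4) by simp
  thus ?thesis using ij(1,2,3) unfolding cos_def by blast
qed

definition pe where "pe = zp_of_int p (int p)"
lemma pe_zp: "pe \<in> zp p" unfolding pe_def by (rule zp_of_int_mem[OF p_pos])
lemma emb_pe: "emb p pe = of_nat p * ep p" unfolding pe_def by (simp add: emb_of_int)

lemma ec_of_int_smul: "ec t (lsmul LL (zp_of_int p k) x) = of_int k * ec t x"
  by (simp add: ec_smul emb_of_int mult.assoc ec_ep)

lemma ec_pe_smul: "ec t (lsmul LL pe x) = of_nat p * ec t x"
  unfolding pe_def using ec_of_int_smul[of t "int p" x] by simp

lemma rep_of_int_ep1: "rep (of_int d * ep p) p 1 = d mod int p"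
proof -
  have "rep (ep p) p 1 = 1" unfolding ep_def using p_gt1 by (simp add: emb.rep_eq)
  thus ?thesis by (simp add: rep_simps mod_simps)
qed

lemma F1: assumes x: "x \<in> lcarrier LL" shows "lsmul LL pe x \<in> M"
proof -
  define f where "f k = lsmul LL (zp_of_int p (int k)) x" for k :: nat
  have "\<exists>i\<in>{0..p}. \<exists>j\<in>{0..p}. i \<noteq> j \<and> (\<exists>m\<in>M. f i = ladd LL (f j) m)"
    by (rule pigeon) (auto simp: f_def intro: car_smul zp_of_int_mem[OF p_pos] x)
  then obtain i j m where ij: "i \<le> p" "j \<le> p" "i \<noteq> j" "m \<in> M" "f i = ladd LL (f j) m" by auto
  define d where "d = int i - int j"
  have mc: "m \<in> lcarrier LL" using ij(4) M_sub by blast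
  have em: "ec t m = of_int d * ec t x" for t
  proof -
    have "ec t (f i) = ec t (f j) + ec t m" using ij(5) by (simp add: ec_add)
    hence "ec t m = ec t (f i) - ec t (f j)" by simp
    also have "\<dots> = of_int (int i) * ec t x - of_int (int j) * ec t x"
      unfolding f_def ec_of_int_smul ..
    also have "\<dots> = of_int d * ec t x" unfolding d_def by (simp add: algebra_simps)
    finally show ?thesis .
  qed
  have d0: "d \<noteq> 0" "\<bar>d\<bar> \<le> int p" using ij(1,2,3) unfolding d_def by auto
  show ?thesis
  proof (cases "\<bar>d\<bar> < int p")
    case True
    have gd: "G (of_int d * ep p)" by (intro G_intros)
    have "\<not> dv 1 (of_int d * ep p)"
    proof
      assume "dv 1 (of_int d * ep p)"
      hence "d mod int p = 0" unfolding dv_def rep_of_int_ep1 .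
      hence "int p dvd d" by auto
      hence "\<bar>int p\<bar> \<le> \<bar>d\<bar>" using d0(1) by (rule dvd_imp_le_int[rotated])
      thus False using True by simp
    qed
    then obtain U where U: "G U" "of_int d * ep p * U = ep p" using G_unit[OF gd] by blast
    define u where "u = rep U p"
    have u: "u \<in> zp p" "emb p u = U" unfolding u_def using G_zp[OF U(1)] emb_rep[OF U(1)] by auto
    define m' where "m' = lsmul LL u m"
    have m'M: "m' \<in> M" unfolding m'_def using M_smul[OF u(1) ij(4)] .
    have "ec t m' = ec t x" for t
    proof -
      have "ec t m' = U * (of_int d * ec t x)" unfolding m'_def ec_smul u(2) em ..
      also have "\<dots> = (of_int d * ep p * U) * ec t x" using ec_ep[of t x] by (simp add: algebra_simps)
      also have "\<dots> = ec t x" unfolding U(2) ec_ep ..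
      finally show ?thesis .
    qed
    hence "m' = x" using M_sub m'M x by (intro eq_ec) auto
    hence "x \<in> M" using m'M by simp
    thus ?thesis using M_smul[OF pe_zp] by blast
  next
    case False
    hence ad: "\<bar>d\<bar> = int p" using d0 by simp
    define sg :: int where "sg = (if d > 0 then 1 else -1)"
    have sgd: "sg * d = int p" using ad d0(1) unfolding sg_def by (auto simp: abs_if)
    define m' where "m' = lsmul LL (zp_of_int p sg) m"
    have m'M: "m' \<in> M" unfolding m'_def using M_smul[OF zp_of_int_mem[OF p_pos] ij(4)] .
    have "ec t m' = ec t (lsmul LL pe x)" for t
    proof -
      have "ec t m' = of_int sg * (of_int d * ec t x)" unfolding m'_def ec_of_int_smul em ..
      also have "\<dots> = of_int (sg * d) * ec t x" by (simp add: algebra_simps)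
      also have "\<dots> = of_nat p * ec t x" unfolding sgd by simp
      also have "\<dots> = ec t (lsmul LL pe x)" unfolding ec_pe_smul ..
      finally show ?thesis .
    qed
    hence "m' = lsmul LL pe x" using M_sub m'M car_smul[OF pe_zp x] by (intro eq_ec) auto
    thus ?thesis using m'M by simp
  qed
qed

lemma ep_mult2: "ep p * (emb p x * Y) = emb p x * Y"
  by (simp add: mult.assoc[symmetric] ep_mult)

lemma ec_br0: "ec 0 (lbr LL x y) = 0"
  by (cases x; cases y) (simp add: ec_def br_L emb_zero)

lemma ec_br1: "ec 1 (lbr LL x y) = of_nat (p ^ s) *
   (AA * (ec 0 x * ec 1 y - ec 1 x * ec 0 y) + (ec 0 x * ec 2 y - ec 2 x * ec 0 y))"
proof -
  obtain x0 x1 x2 y0 y1 y2 where xy: "x = (x0, x1, x2)" "y = (y0, y1, y2)" by (cases x; cases y) auto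
  have "ec 1 (lbr LL x y) = of_int (int p ^ s) * ep p * AA * (emb p x0 * emb p y1 - emb p x1 * emb p y0)
      + of_int (int p ^ s) * ep p * (emb p x0 * emb p y2 - emb p x2 * emb p y0)"
    unfolding xy by (simp add: ec_def br_L emb_add emb_mul emb_sub emb_of_int)
  also have "\<dots> = of_int (int p ^ s) * (AA * (emb p x0 * emb p y1 - emb p x1 * emb p y0)
      + (emb p x0 * emb p y2 - emb p x2 * emb p y0))"
    by (simp add: algebra_simps ep_mult2)
  finally show ?thesis unfolding xy by (simp add: ec_def)
qed

lemma ec_br2: "ec 2 (lbr LL x y) = of_nat (p ^ s) * (CC * (ec 0 x * ec 1 y - ec 1 x * ec 0 y))"
proof -
  obtain x0 x1 x2 y0 y1 y2 where xy: "x = (x0, x1, x2)" "y = (y0, y1, y2)" by (cases x; cases y) auto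
  have "ec 2 (lbr LL x y) = of_int (int p ^ s) * ep p * CC * (emb p x0 * emb p y1 - emb p x1 * emb p y0)"
    unfolding xy by (simp add: ec_def br_L emb_add emb_mul emb_sub emb_of_int)
  also have "\<dots> = of_int (int p ^ s) * (CC * (emb p x0 * emb p y1 - emb p x1 * emb p y0))"
    by (simp add: algebra_simps ep_mult2)
  finally show ?thesis unfolding xy by (simp add: ec_def)
qed

definition "uno = zp_of_int p 1"
definition "pX0 = lsmul LL pe (uno, zp_zero, zp_zero)"
definition "pX1 = lsmul LL pe (zp_zero, uno, zp_zero)"
definition "pX2 = lsmul LL pe (zp_zero, zp_zero, uno)"

lemma uno_zp: "uno \<in> zp p" unfolding uno_def by (rule zp_of_int_mem[OF p_pos])
lemma emb_uno: "emb p uno = ep p" unfolding uno_def by (simp add: emb_of_int)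

lemma X_car: "(uno, zp_zero, zp_zero) \<in> lcarrier LL" "(zp_zero, uno, zp_zero) \<in> lcarrier LL"
  "(zp_zero, zp_zero, uno) \<in> lcarrier LL"
  using uno_zp zp_zero_mem[OF p_pos] by (auto simp: carrier_L)

lemma pX_M: "pX0 \<in> M" "pX1 \<in> M" "pX2 \<in> M"
  unfolding pX0_def pX1_def pX2_def using F1 X_car by auto

lemma ec_pX0: "ec 0 pX0 = of_nat p * ep p" "ec 1 pX0 = 0" "ec 2 pX0 = 0"
  unfolding pX0_def ec_pe_smul by (simp_all add: ec_def emb_uno emb_zero)
lemma ec_pX1: "ec 0 pX1 = 0" "ec 1 pX1 = of_nat p * ep p" "ec 2 pX1 = 0"
  unfolding pX1_def ec_pe_smul by (simp_all add: ec_def emb_uno emb_zero)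
lemma ec_pX2: "ec 0 pX2 = 0" "ec 1 pX2 = 0" "ec 2 pX2 = of_nat p * ep p"
  unfolding pX2_def ec_pe_smul by (simp_all add: ec_def emb_uno emb_zero)

definition "nv V1 V2 = ladd LL (lsmul LL (rep V1 p) pX1) (lsmul LL (rep V2 p) pX2)"

lemma nv_M: "G V1 \<Longrightarrow> G V2 \<Longrightarrow> nv V1 V2 \<in> M"
  unfolding nv_def using pX_M G_zp by (blast intro: M_add M_smul)

lemma nv_car: "G V1 \<Longrightarrow> G V2 \<Longrightarrow> nv V1 V2 \<in> lcarrier LL"
  using nv_M M_sub by blast

lemma ec_nv: assumes "G V1" "G V2"
  shows "ec 0 (nv V1 V2) = 0" "ec 1 (nv V1 V2) = of_nat p * V1" "ec 2 (nv V1 V2) = of_nat p * V2"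
proof -
  have e: "emb p (rep V1 p) = V1" "emb p (rep V2 p) = V2" using emb_rep assms by auto
  show "ec 0 (nv V1 V2) = 0" "ec 1 (nv V1 V2) = of_nat p * V1" "ec 2 (nv V1 V2) = of_nat p * V2"
    unfolding nv_def ec_add ec_smul e ec_pX1 ec_pX2
    by (simp_all add: mult.commute[of V1] mult.commute[of V2] pep_G assms)
qed

definition "Q0 = phi pX0"
definition "Q1 = phi pX1"
definition "Q2 = phi pX2"

lemma Q_car: "Q0 \<in> lcarrier LL" "Q1 \<in> lcarrier LL" "Q2 \<in> lcarrier LL"
  unfolding Q0_def Q1_def Q2_def using pX_M phi_car by auto

lemma phi_nv: assumes "G V1" "G V2"
  shows "ec t (phi (nv V1 V2)) = V1 * ec t Q1 + V2 * ec t Q2"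
proof -
  have e: "emb p (rep V1 p) = V1" "emb p (rep V2 p) = V2" using emb_rep assms by auto
  have z: "rep V1 p \<in> zp p" "rep V2 p \<in> zp p" using G_zp assms by auto
  have "phi (nv V1 V2) = ladd LL (lsmul LL (rep V1 p) Q1) (lsmul LL (rep V2 p) Q2)"
    unfolding nv_def Q1_def Q2_def
    using phi_add[OF M_smul[OF z(1) pX_M(2)] M_smul[OF z(2) pX_M(3)]] phi_smul[OF z(1) pX_M(2)]
      phi_smul[OF z(2) pX_M(3)] by simp
  thus ?thesis by (simp add: ec_add ec_smul e)
qed

lemma G_AA: "G AA" using G_emb a_zp .
lemma G_CC: "G CC" using G_emb c_zp .
lemma CC_nz: "CC \<noteq> 0" using zp_zero_iff[OF c_zp] c_nz by simp

lemma G_Q: "G (ec t Q0)" "G (ec t Q1)" "G (ec t Q2)" using G_ec Q_car by auto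

lemma br_nv:
  assumes g: "G V1" "G V2"
  shows "lbr LL pX0 (nv V1 V2) = nv (of_nat (p ^ s * p) * (AA * V1 + V2)) (of_nat (p ^ s * p) * (CC * V1))"
proof -
  have "G (AA * V1 + V2)" "G (CC * V1)" using g G_AA G_CC by (simp_all add: G_intros3)
  hence gw: "G (of_nat (p ^ s * p) * (AA * V1 + V2))" "G (of_nat (p ^ s * p) * (CC * V1))"
    using G_of_nat_mult by blast+
  have pX0c: "pX0 \<in> lcarrier LL" using pX_M M_sub by blast
  have m1: "ec 0 pX0 * ec 1 (nv V1 V2) = of_nat p * (of_nat p * V1)"
    unfolding ec_pX0 ec_nv[OF g] using pep_G[of "of_nat p * V1"] g by (simp add: G_intros3)
  have m2: "ec 0 pX0 * ec 2 (nv V1 V2) = of_nat p * (of_nat p * V2)"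
    unfolding ec_pX0 ec_nv[OF g] using pep_G[of "of_nat p * V2"] g by (simp add: G_intros3)
  show ?thesis
  proof (rule eq_ec)
    show "lbr LL pX0 (nv V1 V2) \<in> lcarrier LL" using car_br[OF pX0c nv_car[OF g]] .
    show "nv (of_nat (p ^ s * p) * (AA * V1 + V2)) (of_nat (p ^ s * p) * (CC * V1)) \<in> lcarrier LL"
      using nv_car[OF gw] .
    show "ec 0 (lbr LL pX0 (nv V1 V2)) = ec 0 (nv (of_nat (p ^ s * p) * (AA * V1 + V2)) (of_nat (p ^ s * p) * (CC * V1)))"
      using ec_br0 ec_nv[OF gw] by simp
    show "ec 1 (lbr LL pX0 (nv V1 V2)) = ec 1 (nv (of_nat (p ^ s * p) * (AA * V1 + V2)) (of_nat (p ^ s * p) * (CC * V1)))"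
      unfolding ec_br1 ec_nv[OF gw] m1 m2 by (simp add: ec_pX0 ec_nv[OF g] algebra_simps)
    show "ec 2 (lbr LL pX0 (nv V1 V2)) = ec 2 (nv (of_nat (p ^ s * p) * (AA * V1 + V2)) (of_nat (p ^ s * p) * (CC * V1)))"
      unfolding ec_br2 ec_nv[OF gw] m1 by (simp add: ec_pX0 ec_nv[OF g] algebra_simps)
  qed
qed

lemma brk:
  assumes g: "G V1" "G V2"
  defines "W1 \<equiv> of_nat (p ^ s * p) * (AA * V1 + V2)" and "W2 \<equiv> of_nat (p ^ s * p) * (CC * V1)"
  defines "Yf \<equiv> V1 * ec 0 Q1 + V2 * ec 0 Q2" and "Y1 \<equiv> V1 * ec 1 Q1 + V2 * ec 1 Q2"
    and "Y2 \<equiv> V1 * ec 2 Q1 + V2 * ec 2 Q2"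
  shows "W1 * ec 0 Q1 + W2 * ec 0 Q2 = 0"
    "W1 * ec 1 Q1 + W2 * ec 1 Q2 = of_nat (p ^ s) * (AA * (ec 0 Q0 * Y1 - ec 1 Q0 * Yf) + (ec 0 Q0 * Y2 - ec 2 Q0 * Yf))"
    "W1 * ec 2 Q1 + W2 * ec 2 Q2 = of_nat (p ^ s) * (CC * (ec 0 Q0 * Y1 - ec 1 Q0 * Yf))"
proof -
  have "G (AA * V1 + V2)" "G (CC * V1)" using g G_AA G_CC by (simp_all add: G_intros3)
  hence gw: "G W1" "G W2" unfolding W1_def W2_def using G_of_nat_mult by blast+
  have e: "phi (nv W1 W2) = lbr LL Q0 (phi (nv V1 V2))"
    unfolding W1_def W2_def br_nv[OF g, symmetric] Q0_def using phi_br[OF pX_M(1) nv_M[OF g]] .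
  have L: "ec t (phi (nv W1 W2)) = W1 * ec t Q1 + W2 * ec t Q2" for t using phi_nv[OF gw] .
  have R: "ec 0 (phi (nv V1 V2)) = Yf" "ec 1 (phi (nv V1 V2)) = Y1" "ec 2 (phi (nv V1 V2)) = Y2"
    unfolding Yf_def Y1_def Y2_def using phi_nv[OF g] by auto
  show "W1 * ec 0 Q1 + W2 * ec 0 Q2 = 0" using L[of 0] unfolding e ec_br0 by simp
  show "W1 * ec 1 Q1 + W2 * ec 1 Q2 = of_nat (p ^ s) * (AA * (ec 0 Q0 * Y1 - ec 1 Q0 * Yf) + (ec 0 Q0 * Y2 - ec 2 Q0 * Yf))"
    using L[of 1] unfolding e ec_br1 R by simp
  show "W1 * ec 2 Q1 + W2 * ec 2 Q2 = of_nat (p ^ s) * (CC * (ec 0 Q0 * Y1 - ec 1 Q0 * Yf))"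
    using L[of 2] unfolding e ec_br2 R by simp
qed

lemma ps_nz: "p ^ s * p \<noteq> 0" "p ^ s \<noteq> 0" using p_pos by auto

lemma f_zero: "ec 0 Q1 = 0" "ec 0 Q2 = 0"
proof -
  define K where "K = p ^ s * p"
  have K0: "int K \<noteq> 0" unfolding K_def using ps_nz by simp
  have "of_nat K * (AA * 0 + ep p) * ec 0 Q1 + of_nat K * (CC * 0) * ec 0 Q2 = 0"
    using brk(1)[OF G_zero G_ep] unfolding K_def .
  hence "of_nat K * (ep p * ec 0 Q1) = 0" by (simp add: mult.assoc)
  hence "of_int (int K) * ec 0 Q1 = of_int (int K) * 0" using ep_G[OF G_Q(2)] by simp
  thus f1: "ec 0 Q1 = 0" using G_cancel_int[OF G_Q(2) G_zero K0] by blast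
  have "of_nat K * (AA * ep p + 0) * ec 0 Q1 + of_nat K * (CC * ep p) * ec 0 Q2 = 0"
    using brk(1)[OF G_ep G_zero] unfolding K_def .
  hence "of_nat K * (CC * ep p * ec 0 Q2) = 0" unfolding f1 by (simp add: mult.assoc)
  hence "of_int (int K) * (CC * ec 0 Q2) = of_int (int K) * 0" using ep_G'[OF G_CC] by simp
  hence "CC * ec 0 Q2 = 0" using G_cancel_int[OF _ G_zero K0] G_CC G_Q(3) by (blast intro: G_mul)
  thus "ec 0 Q2 = 0" using G_domain[OF G_CC G_Q(3)] CC_nz by blast
qed

lemma H1:
  assumes g: "G V1" "G V2"
  shows "of_nat p * ((AA * V1 + V2) * ec 1 Q1 + (CC * V1) * ec 1 Q2) =
      ec 0 Q0 * (AA * (V1 * ec 1 Q1 + V2 * ec 1 Q2) + (V1 * ec 2 Q1 + V2 * ec 2 Q2))"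
    and "of_nat p * ((AA * V1 + V2) * ec 2 Q1 + (CC * V1) * ec 2 Q2) =
      ec 0 Q0 * (CC * (V1 * ec 1 Q1 + V2 * ec 1 Q2))"
proof -
  have k0: "int (p ^ s) \<noteq> 0" using ps_nz by simp
  note GQ = G_Q
  have b2: "of_nat (p ^ s * p) * (AA * V1 + V2) * ec 1 Q1 + of_nat (p ^ s * p) * (CC * V1) * ec 1 Q2 =
    of_nat (p ^ s) * (AA * (ec 0 Q0 * (V1 * ec 1 Q1 + V2 * ec 1 Q2) - ec 1 Q0 * (V1 * ec 0 Q1 + V2 * ec 0 Q2))
      + (ec 0 Q0 * (V1 * ec 2 Q1 + V2 * ec 2 Q2) - ec 2 Q0 * (V1 * ec 0 Q1 + V2 * ec 0 Q2)))"
    using brk(2)[OF g] .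
  hence "of_int (int (p ^ s)) * (of_nat p * ((AA * V1 + V2) * ec 1 Q1 + (CC * V1) * ec 1 Q2)) =
      of_int (int (p ^ s)) * (ec 0 Q0 * (AA * (V1 * ec 1 Q1 + V2 * ec 1 Q2) + (V1 * ec 2 Q1 + V2 * ec 2 Q2)))"
    unfolding f_zero by (simp add: algebra_simps)
  moreover have "G (of_nat p * ((AA * V1 + V2) * ec 1 Q1 + (CC * V1) * ec 1 Q2))"
    "G (ec 0 Q0 * (AA * (V1 * ec 1 Q1 + V2 * ec 1 Q2) + (V1 * ec 2 Q1 + V2 * ec 2 Q2)))"
    using g GQ G_AA G_CC by (simp_all add: G_intros3)
  ultimately show "of_nat p * ((AA * V1 + V2) * ec 1 Q1 + (CC * V1) * ec 1 Q2) =
      ec 0 Q0 * (AA * (V1 * ec 1 Q1 + V2 * ec 1 Q2) + (V1 * ec 2 Q1 + V2 * ec 2 Q2))"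
    using G_cancel_int k0 by blast
  have b3: "of_nat (p ^ s * p) * (AA * V1 + V2) * ec 2 Q1 + of_nat (p ^ s * p) * (CC * V1) * ec 2 Q2 =
    of_nat (p ^ s) * (CC * (ec 0 Q0 * (V1 * ec 1 Q1 + V2 * ec 1 Q2) - ec 1 Q0 * (V1 * ec 0 Q1 + V2 * ec 0 Q2)))"
    using brk(3)[OF g] .
  hence "of_int (int (p ^ s)) * (of_nat p * ((AA * V1 + V2) * ec 2 Q1 + (CC * V1) * ec 2 Q2)) =
      of_int (int (p ^ s)) * (ec 0 Q0 * (CC * (V1 * ec 1 Q1 + V2 * ec 1 Q2)))"
    unfolding f_zero by (simp add: algebra_simps)
  moreover have "G (of_nat p * ((AA * V1 + V2) * ec 2 Q1 + (CC * V1) * ec 2 Q2))"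
    "G (ec 0 Q0 * (CC * (V1 * ec 1 Q1 + V2 * ec 1 Q2)))"
    using g GQ G_AA G_CC by (simp_all add: G_intros3)
  ultimately show "of_nat p * ((AA * V1 + V2) * ec 2 Q1 + (CC * V1) * ec 2 Q2) =
      ec 0 Q0 * (CC * (V1 * ec 1 Q1 + V2 * ec 1 Q2))"
    using G_cancel_int k0 by blast
qed

lemma H2: "\<exists>D1 D2. G D1 \<and> G D2 \<and> \<not> (dv 1 D1 \<and> dv 1 D2) \<and> dv 1 (D1 * ec 1 Q1 + D2 * ec 1 Q2)
       \<and> dv 1 (D1 * ec 2 Q1 + D2 * ec 2 Q2)"
proof -
  define f where "f ij = (zp_zero, zp_of_int p (int (fst ij)), zp_of_int p (int (snd ij)))" for ij :: "nat \<times> nat"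
  have fc: "f ij \<in> lcarrier LL" for ij
    unfolding f_def carrier_L using zp_zero_mem[OF p_pos] zp_of_int_mem[OF p_pos] by auto
  have card: "card ({0..<p} \<times> {0..<p}) > p"
  proof -
    have "p * 1 < p * p" using p_gt1 by (intro mult_strict_left_mono) auto
    thus ?thesis by (simp add: card_cartesian_product)
  qed
  obtain ij ij' m where ij: "ij \<in> {0..<p} \<times> {0..<p}" "ij' \<in> {0..<p} \<times> {0..<p}" "ij \<noteq> ij'"
    "m \<in> M" "f ij = ladd LL (f ij') m"
    using pigeon[of "{0..<p} \<times> {0..<p}" f, OF _ card fc] by blast
  define d1 where "d1 = int (fst ij) - int (fst ij')"
  define d2 where "d2 = int (snd ij) - int (snd ij')"
  have mc: "m \<in> lcarrier LL" using ij(4) M_sub by blast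
  have em: "ec t m = ec t (f ij) - ec t (f ij')" for t using arg_cong[OF ij(5), of "ec t"] by (simp add: ec_add)
  have e0: "ec 0 m = 0" unfolding em by (simp add: f_def ec_def)
  have e1: "ec 1 m = of_int d1 * ep p" unfolding em d1_def by (simp add: f_def ec_def emb_of_int algebra_simps)
  have e2: "ec 2 m = of_int d2 * ep p" unfolding em d2_def by (simp add: f_def ec_def emb_of_int algebra_simps)
  have small: "d = 0" if "dv 1 (of_int d * ep p)" "\<bar>d\<bar> < int p" for d
  proof (rule ccontr)
    assume "d \<noteq> 0"
    have "d mod int p = 0" using that(1) unfolding dv_def rep_of_int_ep1 .
    hence "int p dvd d" by auto
    hence "\<bar>int p\<bar> \<le> \<bar>d\<bar>" using \<open>d \<noteq> 0\<close> by (rule dvd_imp_le_int[rotated])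
    thus False using that(2) by simp
  qed
  have nd: "\<not> (dv 1 (ec 1 m) \<and> dv 1 (ec 2 m))"
  proof
    assume "dv 1 (ec 1 m) \<and> dv 1 (ec 2 m)"
    moreover have "\<bar>d1\<bar> < int p" "\<bar>d2\<bar> < int p" using ij(1,2) unfolding d1_def d2_def by auto
    ultimately have "d1 = 0" "d2 = 0" using small unfolding e1 e2 by blast+
    hence "ij = ij'" unfolding d1_def d2_def by (simp add: prod_eq_iff)
    thus False using ij(3) by simp
  qed
  have gD: "G (ec 1 m)" "G (ec 2 m)" using G_ec mc by auto
  have eqn: "lsmul LL pe m = nv (ec 1 m) (ec 2 m)"
    using car_smul[OF pe_zp mc] nv_car[OF gD] by (rule eq_ec) (unfold ec_pe_smul ec_nv[OF gD] e0, simp_all)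
  have "phi (nv (ec 1 m) (ec 2 m)) = lsmul LL pe (phi m)" unfolding eqn[symmetric] using phi_smul[OF pe_zp ij(4)] .
  hence "ec t (phi (nv (ec 1 m) (ec 2 m))) = of_nat p * ec t (phi m)" for t by (simp add: ec_pe_smul)
  hence "ec 1 m * ec 1 Q1 + ec 2 m * ec 1 Q2 = of_nat p * ec 1 (phi m)"
    "ec 1 m * ec 2 Q1 + ec 2 m * ec 2 Q2 = of_nat p * ec 2 (phi m)" using phi_nv[OF gD] by metis+
  hence "dv 1 (ec 1 m * ec 1 Q1 + ec 2 m * ec 1 Q2)" "dv 1 (ec 1 m * ec 2 Q1 + ec 2 m * ec 2 Q2)"
    using dv_p by simp_all
  thus ?thesis using gD nd by blast
qed

lemma engine:
  assumes E: "engineQ AA CC (ec 1 Q1) (ec 1 Q2) (ec 2 Q1) (ec 2 Q2) Q"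
  shows False
proof -
  note EQ = E[unfolded engineQ_def]
  have Qa: "\<And>X1 X2. G X1 \<Longrightarrow> G X2 \<Longrightarrow> Q X1 X2 \<Longrightarrow> dv 1 X1 \<and> dv 1 X2" using EQ[THEN conjunct1] by blast
  have Q0: "Q 0 0" using EQ[THEN conjunct2, THEN conjunct1] by blast
  have Qadd: "\<And>X1 X2 Y1 Y2. G X1 \<Longrightarrow> G X2 \<Longrightarrow> G Y1 \<Longrightarrow> G Y2 \<Longrightarrow> Q X1 X2 \<Longrightarrow> Q Y1 Y2 \<Longrightarrow> Q (X1 + Y1) (X2 + Y2)"
    using EQ[THEN conjunct2, THEN conjunct2, THEN conjunct1] by blast
  have Qsm: "\<And>R X1 X2. G R \<Longrightarrow> G X1 \<Longrightarrow> G X2 \<Longrightarrow> Q X1 X2 \<Longrightarrow> Q (R * X1) (R * X2)" using EQ[THEN conjunct2, THEN conjunct2, THEN conjunct2, THEN conjunct1] by blast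
  have QB: "\<And>X1 X2. G X1 \<Longrightarrow> G X2 \<Longrightarrow> Q X1 X2 \<Longrightarrow> Q (AA * X1 + X2) (CC * X1)" using EQ[THEN conjunct2, THEN conjunct2, THEN conjunct2, THEN conjunct2, THEN conjunct1] by blast
  have Qex: "\<exists>X1 X2. G X1 \<and> G X2 \<and> Q X1 X2 \<and> (X1 \<noteq> 0 \<or> X2 \<noteq> 0)" using EQ[THEN conjunct2, THEN conjunct2, THEN conjunct2, THEN conjunct2, THEN conjunct2, THEN conjunct1] by blast
  have Qd: "\<And>V1 V2. G V1 \<Longrightarrow> G V2 \<Longrightarrow> Q (of_nat p * V1) (of_nat p * V2) \<Longrightarrow>
        Q (V1 * ec 1 Q1 + V2 * ec 1 Q2) (V1 * ec 2 Q1 + V2 * ec 2 Q2)" using EQ[THEN conjunct2, THEN conjunct2, THEN conjunct2, THEN conjunct2, THEN conjunct2, THEN conjunct2] by blast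
  define N where "N = {x \<in> lcarrier LL. ec 0 x = 0 \<and> Q (ec 1 x) (ec 2 x)}"
  have NM: "x \<in> M \<and> phi x \<in> N" if x: "x \<in> N" for x
  proof -
    have xc: "x \<in> lcarrier LL" and x0: "ec 0 x = 0" and xq: "Q (ec 1 x) (ec 2 x)" using x unfolding N_def by auto
    have gx: "G (ec 1 x)" "G (ec 2 x)" using G_ec xc by auto
    obtain V1 where v1: "G V1" "ec 1 x = of_nat p ^ 1 * V1" using dv_div gx(1) Qa[OF gx xq] by blast
    obtain V2 where v2: "G V2" "ec 2 x = of_nat p ^ 1 * V2" using dv_div gx(2) Qa[OF gx xq] by blast
    have xe: "x = nv V1 V2"
      using xc nv_car[OF v1(1) v2(1)] by (rule eq_ec) (use x0 v1 v2 ec_nv[OF v1(1) v2(1)] in simp_all)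
    have "x \<in> M" using xe nv_M[OF v1(1) v2(1)] by simp
    moreover have "phi x \<in> N"
    proof -
      have pc: "phi x \<in> lcarrier LL" using phi_car \<open>x \<in> M\<close> by blast
      have "ec 0 (phi x) = 0" unfolding xe phi_nv[OF v1(1) v2(1)] f_zero by simp
      moreover have "Q (ec 1 (phi x)) (ec 2 (phi x))"
        unfolding xe phi_nv[OF v1(1) v2(1)] using Qd[OF v1(1) v2(1)] xq v1(2) v2(2) by simp
      ultimately show ?thesis using pc unfolding N_def by blast
    qed
    ultimately show ?thesis by blast
  qed
  have ideal: "lie_ideal p LL N"
    unfolding lie_ideal_def
  proof (intro conjI ballI)
    show "N \<subseteq> lcarrier LL" unfolding N_def by blast
    show "lzero LL \<in> N" unfolding N_def using M_zero M_sub Q0 by (auto simp: ec_zero)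
  next
    fix x y assume "x \<in> N" "y \<in> N"
    thus "ladd LL x y \<in> N" unfolding N_def
      by (auto simp: ec_add intro!: car_add Qadd G_ec)
  next
    fix r x assume r: "r \<in> zp p" and "x \<in> N"
    thus "lsmul LL r x \<in> N" unfolding N_def
      by (auto simp: ec_smul intro!: car_smul Qsm G_ec G_emb)
  next
    fix x y assume xc: "x \<in> lcarrier LL" and "y \<in> N"
    hence yc: "y \<in> lcarrier LL" and y0: "ec 0 y = 0" and yq: "Q (ec 1 y) (ec 2 y)" unfolding N_def by auto
    have gy: "G (ec 1 y)" "G (ec 2 y)" using G_ec yc by auto
    define R where "R = of_nat (p ^ s) * ec 0 x"
    have gR: "G R" unfolding R_def using G_ec[OF xc] by (rule G_of_nat_mult)
    have gB: "G (AA * ec 1 y + ec 2 y)" "G (CC * ec 1 y)" using gy G_AA G_CC by (simp_all add: G_intros3)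
    have "Q (R * (AA * ec 1 y + ec 2 y)) (R * (CC * ec 1 y))" using Qsm[OF gR gB QB[OF gy yq]] .
    moreover have "ec 1 (lbr LL x y) = R * (AA * ec 1 y + ec 2 y)"
      unfolding ec_br1 y0 R_def by (simp add: algebra_simps)
    moreover have "ec 2 (lbr LL x y) = R * (CC * ec 1 y)"
      unfolding ec_br2 y0 R_def by (simp add: algebra_simps)
    ultimately show "lbr LL x y \<in> N" unfolding N_def using car_br[OF xc yc] ec_br0 by simp
  qed
  have dom: "N \<subseteq> dom_pow LL M phi n" for n
  proof (induction n)
    case 0 thus ?case unfolding N_def by simp
  next
    case (Suc n) thus ?case using NM by auto
  qed
  have inv: "invariant_ideal p LL M phi N"
    unfolding invariant_ideal_def using ideal dom NM by blast
  obtain X1 X2 where X: "G X1" "G X2" "Q X1 X2" "X1 \<noteq> 0 \<or> X2 \<noteq> 0" using Qex by blast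
  define x where "x = (zp_zero, rep X1 p, rep X2 p)"
  have xc: "x \<in> lcarrier LL" unfolding x_def carrier_L using G_zp X zp_zero_mem[OF p_pos] by auto
  have ex: "ec 0 x = 0" "ec 1 x = X1" "ec 2 x = X2" unfolding x_def using emb_rep X by (simp_all add: ec_def emb_zero)
  have "x \<in> N" unfolding N_def using xc ex X by simp
  moreover have "x \<noteq> lzero LL" using ex X(4) ec_zero by metis
  ultimately show False using simple[OF inv] by blast
qed

lemma final_T:
  assumes cases: "(dv 1 AA \<and> dv 2 CC) \<or> (\<not> dv 1 AA \<and> dv 1 CC) \<or> (p \<ge> 3 \<and> AA \<noteq> 0 \<and> dv 1 AA \<and> \<not> dv 1 CC)
       \<or> (AA = 0 \<and> \<not> dv 1 CC \<and> \<not> (\<exists>x::int. x ^ 2 mod int p = rep CC p 1))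
       \<or> (\<not> dv 1 AA \<and> \<not> dv 1 CC \<and> (\<not> dv 1 (4 * CC + AA * AA) \<or> dv 2 (4 * CC + AA * AA)))"
  shows False
proof -
  obtain Q where "engineQ AA CC (ec 1 Q1) (ec 1 Q2) (ec 2 Q1) (ec 2 Q2) Q"
    using core_final[OF G_AA G_CC G_Q(1) G_Q(2) G_Q(3) G_Q(2) G_Q(3) CC_nz H1(1) H1(2) H2 cases] by blast
  thus False by (rule engine)
qed

end

context padic
begin

lemma val_help:
  assumes x: "x \<in> zp p" and nz: "x \<noteq> zp_zero"
  shows "(LEAST n. x (Suc n) \<noteq> 0) \<ge> 1 \<longleftrightarrow> x 1 = 0"
    and "(LEAST n. x (Suc n) \<noteq> 0) \<ge> 2 \<longleftrightarrow> x 2 = 0"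
proof -
  obtain i where i: "x i = 0" "x (Suc i) \<noteq> 0" using zp_nonzero_wit[OF x nz] by blast
  define L where "L = (LEAST n. x (Suc n) \<noteq> 0)"
  have L: "x (Suc L) \<noteq> 0" unfolding L_def using i(2) by (rule LeastI)
  have Lle: "x (Suc n) \<noteq> 0 \<Longrightarrow> L \<le> n" for n unfolding L_def by (rule Least_le)
  have x12: "x 1 = x 2 mod int p" using zp_coh[OF x, of 1 2] by simp
  show "L \<ge> 1 \<longleftrightarrow> x 1 = 0"
  proof
    assume "L \<ge> 1"
    thus "x 1 = 0" using Lle[of 0] by (cases "x 1 = 0") auto
  next
    assume "x 1 = 0" thus "L \<ge> 1" using L by (cases L) auto
  qed
  show "L \<ge> 2 \<longleftrightarrow> x 2 = 0"
  proof
    assume "L \<ge> 2"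
    thus "x 2 = 0" using Lle[of 1] by (cases "x 2 = 0") (auto simp: numeral_2_eq_2)
  next
    assume h: "x 2 = 0"
    hence "x 1 = 0" using x12 by simp
    thus "L \<ge> 2" using L h by (cases L; cases "L - 1") (auto simp: numeral_2_eq_2)
  qed
qed

lemma val_ge1: "x \<in> zp p \<Longrightarrow> zp_val p x \<ge> 1 \<longleftrightarrow> x 1 = 0"
  using val_help(1)[of x] unfolding zp_val_def by (auto simp: zp_zero_def one_enat_def)

lemma val_ge2: "x \<in> zp p \<Longrightarrow> zp_val p x \<ge> 2 \<longleftrightarrow> x 2 = 0"
  using val_help(2)[of x] unfolding zp_val_def by (auto simp: zp_zero_def numeral_eq_enat)

lemma enat_0_iff: "(e::enat) = 0 \<longleftrightarrow> \<not> e \<ge> 1"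
  by (cases e) (auto simp: one_enat_def zero_enat_def)
lemma enat_1_iff: "(e::enat) = 1 \<longleftrightarrow> e \<ge> 1 \<and> \<not> e \<ge> 2"
  by (cases e) (auto simp: one_enat_def numeral_eq_enat)

lemma dv_emb: "x \<in> zp p \<Longrightarrow> dv k (emb p x) \<longleftrightarrow> x k = 0"
  unfolding dv_def by (simp add: emb.rep_eq zp_mod)

lemma rep_emb1: "x \<in> zp p \<Longrightarrow> rep (emb p x) p 1 = x 1"
  using zp_mod[of x p 1] by (simp add: emb.rep_eq)

end

theorem proposition1p20:
  fixes p s :: nat and a c :: "nat \<Rightarrow> int"
  assumes "prime p"
    and "a \<in> zp p" and "c \<in> zp p" and "c \<noteq> zp_zero"
    and "(zp_val p a \<ge> 1 \<and> zp_val p c \<ge> 2)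
       \<or> (zp_val p a = 0 \<and> zp_val p c \<ge> 1)
       \<or> (p \<ge> 3 \<and> a \<noteq> zp_zero \<and> zp_val p a \<ge> 1 \<and> zp_val p c = 0)
       \<or> (a = zp_zero \<and> zp_val p c = 0 \<and> \<not> (\<exists>x::int. x ^ 2 mod int p = c 1))
       \<or> (zp_val p a = 0 \<and> zp_val p c = 0
          \<and> zp_val p (zp_add p (zp_mul p (zp_of_int p 4) c) (zp_mul p a a)) \<noteq> 1)"
  shows "\<not> self_similar_of_index p (L7 p s a c) 1"
proof
  assume "self_similar_of_index p (L7 p s a c) 1"
  then obtain M phi where sv: "simple_virtual_endo p (L7 p s a c) M phi"
    and ix: "lie_index (L7 p s a c) M = p ^ 1"
    unfolding self_similar_of_index_def by blast
  interpret setting p s a c M phi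
    using assms(1-4) sv ix by unfold_locales simp_all
  define d where "d = zp_add p (zp_mul p (zp_of_int p 4) c) (zp_mul p a a)"
  have dz: "d \<in> zp p" unfolding d_def
    using a_zp c_zp by (intro zp_add_mem zp_mul_mem zp_of_int_mem p_pos)
  have ed: "emb p d = 4 * CC + AA * AA"
    unfolding d_def emb_add emb_mul emb_of_int by (simp add: mult.assoc ep_mult)
  have fa: "dv 1 AA \<longleftrightarrow> zp_val p a \<ge> 1" using dv_emb[OF a_zp] val_ge1[OF a_zp] by simp
  have fa': "zp_val p a = 0 \<longleftrightarrow> \<not> zp_val p a \<ge> 1" by (rule enat_0_iff)
  have fc1: "dv 1 CC \<longleftrightarrow> zp_val p c \<ge> 1" using dv_emb[OF c_zp] val_ge1[OF c_zp] by simp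
  have fc2: "dv 2 CC \<longleftrightarrow> zp_val p c \<ge> 2" using dv_emb[OF c_zp] val_ge2[OF c_zp] by simp
  have fc': "zp_val p c = 0 \<longleftrightarrow> \<not> zp_val p c \<ge> 1" by (rule enat_0_iff)
  have fd1: "dv 1 (4 * CC + AA * AA) \<longleftrightarrow> zp_val p d \<ge> 1" using dv_emb[OF dz] val_ge1[OF dz] ed by simp
  have fd2: "dv 2 (4 * CC + AA * AA) \<longleftrightarrow> zp_val p d \<ge> 2" using dv_emb[OF dz] val_ge2[OF dz] ed by simp
  have fd': "zp_val p d = 1 \<longleftrightarrow> zp_val p d \<ge> 1 \<and> \<not> zp_val p d \<ge> 2" by (rule enat_1_iff)
  have fA: "AA = 0 \<longleftrightarrow> a = zp_zero" using zp_zero_iff[OF a_zp] by simp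
  have rc: "rep CC p 1 = c 1" using rep_emb1[OF c_zp] .
  have "(dv 1 AA \<and> dv 2 CC) \<or> (\<not> dv 1 AA \<and> dv 1 CC) \<or> (p \<ge> 3 \<and> AA \<noteq> 0 \<and> dv 1 AA \<and> \<not> dv 1 CC)
       \<or> (AA = 0 \<and> \<not> dv 1 CC \<and> \<not> (\<exists>x::int. x ^ 2 mod int p = rep CC p 1))
       \<or> (\<not> dv 1 AA \<and> \<not> dv 1 CC \<and> (\<not> dv 1 (4 * CC + AA * AA) \<or> dv 2 (4 * CC + AA * AA)))"
    using assms(5) unfolding d_def[symmetric] rc fa fc1 fc2 fd1 fd2 fA fa' fc' fd' by blast
  thus False by (rule final_T)
qed


end
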